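(* $\mathrm{UF}_1^=$ has the finite model property. Moreover, there is a fixed polynomial $p$ such that every satisfiable $\mathrm{UF}_1^=$-formula $\phi$ has a finite model whose domain has size at most $2^{p(|\phi|)}$ (i.e., bounded exponentially in $|\phi|$).
   Context: Vocabularies are relational (relation symbols of positive finite arities, no constants or function symbols). A $k$-ary $\tau$-atom is an atomic formula (a relational atom $R(z_1,\dots,z_m)$ with $R\in\tau$, or an equality $z=z'$) having exactly $k$ distinct free variables. For a finite set $V$ of variables, a $V$-uniform set is a finite set of relational (non-equality) $\tau$-atoms $R(z_1,\dots,z_m)$ with $\{z_1,\dots,z_m\}=V$. The set $\mathrm{UF}_1^=(\tau)$ is the smallest set $\mathcal F$ such that: (1) every unary $\tau$-atom, and $\bot,\top$, are in $\mathcal F$; (2) every equality $x=y$ is in $\mathcal F$; (3) $\mathcal F$ is closed under $\neg$ and $\wedge$; (4) if $X=\{x_0,\dots,x_k\}$ is a finite set of variables, $U$ a finite set of formulas of $\mathcal F$ with free variables in $X$, $V\subseteq X$, $F$ a $V$-uniform set of $\tau$-atoms, and $\varphi$ a Boolean combination of formulas in $U\cup F$, then $\exists x_1\dots\exists x_k\,\varphi\in\mathcal F$ and $\exists x_0\dots\exists x_k\,\varphi\in\mathcal F$. $\mathrm{UF}_1^=$ is the union of $\mathrm{UF}_1^=(\tau)$ over all vocabularies; $\forall$ and other connectives are abbreviations. A logic has the finite model property if every satisfiable formula has a finite model. *)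

theory Defs
  imports "HOL-Computational_Algebra.Polynomial"
begin

text \<open>A vocabulary is given by an arity function ar; a relational atom
  Rel R zs is well-formed iff length zs = ar R and ar R > 0.
  Only the primitive connectives (negation, conjunction, existential
  quantification) are included; all others are abbreviations.\<close>

datatype fm =
    Bot
  | Top
  | Rel nat "nat list"
  | Eq nat nat
  | Neg fm
  | Conj fm fm
  | Ex nat fm

fun fv :: "fm \<Rightarrow> nat set" where
  "fv Bot = {}"
| "fv Top = {}"
| "fv (Rel R zs) = set zs"
| "fv (Eq x y) = {x, y}"
| "fv (Neg \<phi>) = fv \<phi>"
| "fv (Conj \<phi> \<psi>) = fv \<phi> \<union> fv \<psi>"
| "fv (Ex x \<phi>) = fv \<phi> - {x}"

text \<open>Length of a formula: number of symbol occurrences.\<close>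
fun fsize :: "fm \<Rightarrow> nat" where
  "fsize Bot = 1"
| "fsize Top = 1"
| "fsize (Rel R zs) = 1 + length zs"
| "fsize (Eq x y) = 3"
| "fsize (Neg \<phi>) = 1 + fsize \<phi>"
| "fsize (Conj \<phi> \<psi>) = 1 + fsize \<phi> + fsize \<psi>"
| "fsize (Ex x \<phi>) = 2 + fsize \<phi>"

fun sat :: "'a set \<Rightarrow> (nat \<Rightarrow> 'a list \<Rightarrow> bool) \<Rightarrow> (nat \<Rightarrow> 'a) \<Rightarrow> fm \<Rightarrow> bool" where
  "sat D I \<sigma> Bot = False"
| "sat D I \<sigma> Top = True"
| "sat D I \<sigma> (Rel R zs) = I R (map \<sigma> zs)"
| "sat D I \<sigma> (Eq x y) = (\<sigma> x = \<sigma> y)"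
| "sat D I \<sigma> (Neg \<phi>) = (\<not> sat D I \<sigma> \<phi>)"
| "sat D I \<sigma> (Conj \<phi> \<psi>) = (sat D I \<sigma> \<phi> \<and> sat D I \<sigma> \<psi>)"
| "sat D I \<sigma> (Ex x \<phi>) = (\<exists>d\<in>D. sat D I (\<sigma>(x := d)) \<phi>)"

definition is_model :: "'a set \<Rightarrow> (nat \<Rightarrow> 'a list \<Rightarrow> bool) \<Rightarrow> (nat \<Rightarrow> 'a) \<Rightarrow> fm \<Rightarrow> bool" where
  "is_model D I \<sigma> \<phi> \<longleftrightarrow> D \<noteq> {} \<and> (\<forall>x. \<sigma> x \<in> D) \<and> sat D I \<sigma> \<phi>"

definition rel_atom :: "(nat \<Rightarrow> nat) \<Rightarrow> fm \<Rightarrow> bool" where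
  "rel_atom ar \<phi> \<longleftrightarrow> (\<exists>R zs. \<phi> = Rel R zs \<and> length zs = ar R \<and> 0 < ar R)"

definition uniform_set :: "(nat \<Rightarrow> nat) \<Rightarrow> nat set \<Rightarrow> fm set \<Rightarrow> bool" where
  "uniform_set ar V F \<longleftrightarrow> finite F \<and> (\<forall>\<phi>\<in>F. rel_atom ar \<phi> \<and> fv \<phi> = V)"

inductive bool_comb :: "fm set \<Rightarrow> fm \<Rightarrow> bool" for S where
  bc_base: "\<phi> \<in> S \<Longrightarrow> bool_comb S \<phi>"
| bc_neg: "bool_comb S \<phi> \<Longrightarrow> bool_comb S (Neg \<phi>)"
| bc_conj: "bool_comb S \<phi> \<Longrightarrow> bool_comb S \<psi> \<Longrightarrow> bool_comb S (Conj \<phi> \<psi>)"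

fun Exs :: "nat list \<Rightarrow> fm \<Rightarrow> fm" where
  "Exs [] \<phi> = \<phi>"
| "Exs (x # xs) \<phi> = Ex x (Exs xs \<phi>)"

inductive uf1 :: "(nat \<Rightarrow> nat) \<Rightarrow> fm \<Rightarrow> bool" for ar where
  uf_unary_rel: "rel_atom ar \<phi> \<Longrightarrow> card (fv \<phi>) = 1 \<Longrightarrow> uf1 ar \<phi>"
| uf_bot: "uf1 ar Bot"
| uf_top: "uf1 ar Top"
| uf_eq: "uf1 ar (Eq x y)"
| uf_neg: "uf1 ar \<phi> \<Longrightarrow> uf1 ar (Neg \<phi>)"
| uf_conj: "uf1 ar \<phi> \<Longrightarrow> uf1 ar \<psi> \<Longrightarrow> uf1 ar (Conj \<phi> \<psi>)"
| uf_ex: "\<lbrakk> xs \<noteq> []; distinct xs; finite U;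
            \<forall>\<psi>\<in>U. uf1 ar \<psi> \<and> fv \<psi> \<subseteq> set xs;
            V \<subseteq> set xs; uniform_set ar V F;
            bool_comb (U \<union> F) \<phi> \<rbrakk>
          \<Longrightarrow> uf1 ar (Exs (tl xs) \<phi>)"
| uf_ex_all: "\<lbrakk> xs \<noteq> []; distinct xs; finite U;
            \<forall>\<psi>\<in>U. uf1 ar \<psi> \<and> fv \<psi> \<subseteq> set xs;
            V \<subseteq> set xs; uniform_set ar V F;
            bool_comb (U \<union> F) \<phi> \<rbrakk>
          \<Longrightarrow> uf1 ar (Exs xs \<phi>)"

end

theory Submission
  imports Defs
begin


fun subs :: "fm \<Rightarrow> fm set" where
  "subs Bot = {Bot}"
| "subs Top = {Top}"
| "subs (Rel R zs) = {Rel R zs}"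
| "subs (Eq x y) = {Eq x y}"
| "subs (Neg \<phi>) = insert (Neg \<phi>) (subs \<phi>)"
| "subs (Conj \<phi> \<psi>) = insert (Conj \<phi> \<psi>) (subs \<phi> \<union> subs \<psi>)"
| "subs (Ex x \<phi>) = insert (Ex x \<phi>) (subs \<phi>)"

fun vars :: "fm \<Rightarrow> nat set" where
  "vars Bot = {}"
| "vars Top = {}"
| "vars (Rel R zs) = set zs"
| "vars (Eq x y) = {x, y}"
| "vars (Neg \<phi>) = vars \<phi>"
| "vars (Conj \<phi> \<psi>) = vars \<phi> \<union> vars \<psi>"
| "vars (Ex x \<phi>) = insert x (vars \<phi>)"

lemma subs_self[simp]: "\<phi> \<in> subs \<phi>"
  by (cases \<phi>) auto

lemma finite_subs[simp]: "finite (subs \<phi>)"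
  by (induction \<phi>) auto

lemma finite_vars[simp]: "finite (vars \<phi>)"
  by (induction \<phi>) auto

lemma card_subs: "card (subs \<phi>) \<le> fsize \<phi>"
proof (induction \<phi>)
  case (Neg \<phi>) then show ?case by (simp add: card_insert_if)
next
  case (Conj \<phi>1 \<phi>2)
  have "card (subs (Conj \<phi>1 \<phi>2)) \<le> Suc (card (subs \<phi>1 \<union> subs \<phi>2))"
    by (simp add: card_insert_if)
  also have "\<dots> \<le> Suc (card (subs \<phi>1) + card (subs \<phi>2))"
    using card_Un_le by (metis Suc_le_mono)
  finally show ?case using Conj by simp
next
  case (Ex x \<phi>) then show ?case by (simp add: card_insert_if)
qed auto

lemma card_vars: "card (vars \<phi>) \<le> fsize \<phi>"
proof (induction \<phi>)
  case (Rel R zs) then show ?case using card_length[of zs] by simp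
next
  case (Eq x y) then show ?case by (simp add: card_insert_if)
next
  case (Conj \<phi>1 \<phi>2)
  have "card (vars (Conj \<phi>1 \<phi>2)) \<le> card (vars \<phi>1) + card (vars \<phi>2)"
    by (simp add: card_Un_le)
  then show ?case using Conj by simp
next
  case (Ex x \<phi>) then show ?case by (simp add: card_insert_if)
qed auto

lemma subs_trans: "\<psi> \<in> subs \<phi> \<Longrightarrow> subs \<psi> \<subseteq> subs \<phi>"
  by (induction \<phi>) auto

lemma subs_vars: "\<psi> \<in> subs \<phi> \<Longrightarrow> vars \<psi> \<subseteq> vars \<phi>"
  by (induction \<phi>) auto

lemma fv_vars: "fv \<phi> \<subseteq> vars \<phi>"
  by (induction \<phi>) auto

lemma subs_Exs: "Exs ys \<chi> \<in> subs \<phi> \<Longrightarrow> \<chi> \<in> subs \<phi> \<and> set ys \<subseteq> vars \<phi>"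
proof (induction ys)
  case Nil then show ?case by simp
next
  case (Cons y ys)
  have "subs (Exs (y # ys) \<chi>) \<subseteq> subs \<phi>" using Cons.prems subs_trans by blast
  then have "Exs ys \<chi> \<in> subs \<phi>" by auto
  moreover have "vars (Exs (y # ys) \<chi>) \<subseteq> vars \<phi>" using Cons.prems subs_vars by blast
  ultimately show ?case using Cons.IH by auto
qed

lemma fv_Exs[simp]: "fv (Exs ys \<chi>) = fv \<chi> - set ys"
  by (induction ys) auto

lemma fsize_Exs: "fsize (Exs ys \<chi>) = 2 * length ys + fsize \<chi>"
  by (induction ys) auto

lemma Exs_inj: "Exs ys \<chi> = Exs ys' \<chi> \<Longrightarrow> ys = ys'"
proof (induction ys arbitrary: ys')
  case Nil
  then show ?case using fsize_Exs[of ys' \<chi>] fsize_Exs[of "[]" \<chi>] by (cases ys') auto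
next
  case (Cons y ys)
  then show ?case using fsize_Exs[of "y#ys" \<chi>] fsize_Exs[of "[]" \<chi>] by (cases ys') auto
qed

lemma sat_cong: "(\<forall>x\<in>fv \<psi>. \<sigma> x = \<sigma>' x) \<Longrightarrow> sat D I \<sigma> \<psi> = sat D I \<sigma>' \<psi>"
proof (induction \<psi> arbitrary: \<sigma> \<sigma>')
  case (Rel R zs) then show ?case by (simp cong: map_cong)
next
  case (Ex x \<psi>)
  have "\<And>d. sat D I (\<sigma>(x:=d)) \<psi> = sat D I (\<sigma>'(x:=d)) \<psi>"
    using Ex by (intro Ex.IH) auto
  then show ?case by simp
next
  case (Conj a b)
  have "sat D I \<sigma> a = sat D I \<sigma>' a" by (rule Conj.IH(1)) (use Conj.prems in simp)
  moreover have "sat D I \<sigma> b = sat D I \<sigma>' b" by (rule Conj.IH(2)) (use Conj.prems in simp)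
  ultimately show ?case by simp
qed auto

lemma sat_Exs: "sat D I \<sigma> (Exs ys \<chi>) \<longleftrightarrow>
   (\<exists>w. (\<forall>v. v \<notin> set ys \<longrightarrow> w v = \<sigma> v) \<and> (\<forall>v\<in>set ys. w v \<in> D) \<and> sat D I w \<chi>)"
proof (induction ys arbitrary: \<sigma>)
  case Nil
  show ?case
  proof
    assume "sat D I \<sigma> (Exs [] \<chi>)" then show "\<exists>w. (\<forall>v. v \<notin> set [] \<longrightarrow> w v = \<sigma> v) \<and> (\<forall>v\<in>set []. w v \<in> D) \<and> sat D I w \<chi>"
      by (intro exI[of _ \<sigma>]) simp
  next
    assume "\<exists>w. (\<forall>v. v \<notin> set [] \<longrightarrow> w v = \<sigma> v) \<and> (\<forall>v\<in>set []. w v \<in> D) \<and> sat D I w \<chi>"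
    then obtain w where "\<forall>v. w v = \<sigma> v" "sat D I w \<chi>" by auto
    then have "w = \<sigma>" by auto
    then show "sat D I \<sigma> (Exs [] \<chi>)" using \<open>sat D I w \<chi>\<close> by simp
  qed
next
  case (Cons y ys)
  show ?case
  proof
    assume "sat D I \<sigma> (Exs (y # ys) \<chi>)"
    then obtain d where d: "d \<in> D" "sat D I (\<sigma>(y:=d)) (Exs ys \<chi>)" by auto
    then obtain w where w: "\<forall>v. v \<notin> set ys \<longrightarrow> w v = (\<sigma>(y:=d)) v" "\<forall>v\<in>set ys. w v \<in> D" "sat D I w \<chi>"
      using Cons.IH by blast
    show "\<exists>w. (\<forall>v. v \<notin> set (y # ys) \<longrightarrow> w v = \<sigma> v) \<and> (\<forall>v\<in>set (y # ys). w v \<in> D) \<and> sat D I w \<chi>"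
      by (rule exI[of _ w]) (use w d in auto)
  next
    assume "\<exists>w. (\<forall>v. v \<notin> set (y # ys) \<longrightarrow> w v = \<sigma> v) \<and> (\<forall>v\<in>set (y # ys). w v \<in> D) \<and> sat D I w \<chi>"
    then obtain w where w: "\<forall>v. v \<notin> set (y # ys) \<longrightarrow> w v = \<sigma> v" "\<forall>v\<in>set (y # ys). w v \<in> D" "sat D I w \<chi>"
      by blast
    have "\<forall>v. v \<notin> set ys \<longrightarrow> w v = (\<sigma>(y:=w y)) v" using w(1) by auto
    then have "sat D I (\<sigma>(y:=w y)) (Exs ys \<chi>)"
      using Cons.IH[of "\<sigma>(y:=w y)"] w(2,3) by (metis list.set_intros(2))
    then show "sat D I \<sigma> (Exs (y # ys) \<chi>)" using w by auto
  qed
qed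



type_synonym qt = "nat \<times> nat list \<times> fm \<times> nat set"

definition qx0 :: "qt \<Rightarrow> nat" where "qx0 q = fst q"
definition qys :: "qt \<Rightarrow> nat list" where "qys q = fst (snd q)"
definition qchi :: "qt \<Rightarrow> fm" where "qchi q = fst (snd (snd q))"
definition qV :: "qt \<Rightarrow> nat set" where "qV q = snd (snd (snd q))"

definition nin :: "nat \<Rightarrow> nat list \<Rightarrow> fm" where
  "nin x vs = foldr (\<lambda>v a. Conj (Neg (Eq x v)) a) vs Top"

definition outf :: "qt \<Rightarrow> fm" where
  "outf q = Exs (qys q) (Conj (qchi q) (nin (qx0 q) (sorted_list_of_set (qV q))))"

lemma sat_nin: "sat D I w (nin x vs) \<longleftrightarrow> (\<forall>v\<in>set vs. w x \<noteq> w v)"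
  unfolding nin_def by (induction vs) auto

datatype 'a idx = IIn qt nat | IOut "fm set" qt nat | IRare 'a qt nat | IPlain nat

type_synonym 'a el = "'a + fm set \<times> nat \<times> 'a idx"

locale fmp =
  fixes D :: "'a set" and I :: "nat \<Rightarrow> 'a list \<Rightarrow> bool" and \<phi> :: fm
  assumes Dne: "D \<noteq> {}"
begin

definition "z0 = Suc (Max (insert 0 (vars \<phi>)))"
definition "Vs = insert z0 (vars \<phi>)"
definition "atomsets = insert {} {set zs | R zs. Rel R zs \<in> subs \<phi>}"
definition "Q = {q. Exs (qys q) (qchi q) \<in> subs \<phi> \<and> qx0 q \<in> Vs \<and> qx0 q \<notin> set (qys q) \<and> qV q \<in> atomsets}"
definition "Phi = subs \<phi> \<union> outf ` Q"
definition "typ b = {\<theta> \<in> Phi. sat D I (\<lambda>_. b) \<theta>}"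
definition "Ty = typ ` D"
definition "cnt \<tau> = {d\<in>D. typ d = \<tau>}"
definition "n0 = card Vs"
definition "rare \<tau> = (finite (cnt \<tau>) \<and> card (cnt \<tau>) < n0)"
definition "RareEl = {d\<in>D. rare (typ d)}"
definition "IdxS = (\<lambda>(q,v). IIn q v) ` (Q \<times> Vs) \<union> (\<lambda>(\<tau>,q,v). IOut \<tau> q v) ` (Ty \<times> Q \<times> Vs)
   \<union> (\<lambda>(a,q,v). IRare a q v) ` (RareEl \<times> Q \<times> Vs) \<union> IPlain ` Vs"
definition Dn :: "'a el set" where "Dn = Inl ` RareEl \<union> Inr ` {(\<tau>, j, i). \<tau> \<in> Ty \<and> \<not> rare \<tau> \<and> j < 3 \<and> i \<in> IdxS}"
definition tp :: "'a el \<Rightarrow> fm set" where "tp c = (case c of Inl d \<Rightarrow> typ d | Inr (\<tau>, _, _) \<Rightarrow> \<tau>)"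
definition "rep \<tau> = (SOME d. d \<in> D \<and> typ d = \<tau>)"
definition "wit b q w = ((\<forall>v. v \<notin> set (qys q) \<longrightarrow> w v = b) \<and> (\<forall>v. w v \<in> D) \<and> sat D I w (qchi q))"
definition "Win b q = (SOME w. wit b q w)"
definition "Wout \<tau> q = (SOME w. wit (rep \<tau>) q w \<and> w (qx0 q) \<notin> w ` qV q)"
definition rho :: "'a el \<Rightarrow> 'a" where "rho c = (case c of Inl d \<Rightarrow> d | Inr (\<tau>', j, i) \<Rightarrow>
   (case i of IOut \<tau> q v \<Rightarrow> (if Wout \<tau> q v \<in> D \<and> typ (Wout \<tau> q v) = \<tau>' then Wout \<tau> q v else rep \<tau>')
      | IRare a q v \<Rightarrow> (if Win a q v \<in> D \<and> typ (Win a q v) = \<tau>' then Win a q v else rep \<tau>')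
      | _ \<Rightarrow> rep \<tau>'))"
definition grp :: "'a el \<Rightarrow> nat option" where "grp c = (case c of Inl _ \<Rightarrow> None | Inr (_, j, _) \<Rightarrow> Some j)"
definition wq :: "'a el \<Rightarrow> qt \<Rightarrow> nat \<Rightarrow> 'a" where "wq c0 q = (case c0 of Inl a \<Rightarrow> Win a q
    | Inr (\<tau>, j, i) \<Rightarrow> if outf q \<in> \<tau> then Wout \<tau> q else Win (rho c0) q)"
definition pool :: "'a el \<Rightarrow> qt \<Rightarrow> fm set \<Rightarrow> nat \<Rightarrow> 'a el" where "pool c0 q \<tau>' v = (case c0 of Inl a \<Rightarrow> Inr (\<tau>', 0, IRare a q v)
    | Inr (\<tau>, j, i) \<Rightarrow> if outf q \<in> \<tau> then Inr (\<tau>', Suc j mod 3, IOut \<tau> q v) else Inr (\<tau>', Suc j mod 3, IIn q v))"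
definition "canon w ys v = (LEAST u. u \<in> set ys \<and> w u = w v)"
definition cbar :: "'a el \<Rightarrow> qt \<Rightarrow> nat \<Rightarrow> 'a el" where "cbar c0 q v = (let w = wq c0 q in if w v = w (qx0 q) then c0
    else if rare (typ (w v)) then Inl (w v) else pool c0 q (typ (w v)) (canon w (qys q) v))"
definition reqok :: "'a el \<Rightarrow> qt \<Rightarrow> bool" where "reqok c0 q = (c0 \<in> Dn \<and> q \<in> Q \<and> Exs (qys q) (qchi q) \<in> tp c0)"
definition ownedBy :: "'a el set \<Rightarrow> 'a el \<times> qt \<Rightarrow> bool" where "ownedBy E r = (case r of (c0, q) \<Rightarrow> reqok c0 q \<and>
   (\<exists>\<tau> j i. c0 = Inr (\<tau>, j, i) \<and> outf q \<notin> \<tau> \<and> (\<exists>e\<in>E. grp e = Some (Suc j mod 3)))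
   \<and> E = cbar c0 q ` qV q \<and> c0 \<in> E)"
definition hfun :: "'a el \<times> qt \<Rightarrow> 'a el \<Rightarrow> 'a" where "hfun r c = (case r of (c0, q) \<Rightarrow> wq c0 q (SOME v. cbar c0 q v = c))"
definition good :: "('a el \<Rightarrow> 'a) \<Rightarrow> 'a el set \<Rightarrow> bool" where "good f E = (inj_on f E \<and> (\<forall>c\<in>E. f c \<in> D \<and> typ (f c) = tp c))"
definition fE :: "'a el set \<Rightarrow> 'a el \<Rightarrow> 'a" where "fE E = (if \<exists>r. ownedBy E r then hfun (SOME r. ownedBy E r)
    else if inj_on rho E then rho else (SOME f. good f E))"
definition In :: "nat \<Rightarrow> 'a el list \<Rightarrow> bool" where "In R t = I R (map (fE (set t)) t)"

lemma finite_Phi_aux: "finite {set zs | R zs. Rel R zs \<in> subs \<phi>}"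
proof -
  have "{set zs | R zs. Rel R zs \<in> subs \<phi>} \<subseteq> (\<lambda>f. case f of Rel R zs \<Rightarrow> set zs | _ \<Rightarrow> {}) ` subs \<phi>"
  proof
    fix A assume "A \<in> {set zs | R zs. Rel R zs \<in> subs \<phi>}"
    then obtain R zs where "A = set zs" "Rel R zs \<in> subs \<phi>" by blast
    then show "A \<in> (\<lambda>f. case f of Rel R zs \<Rightarrow> set zs | _ \<Rightarrow> {}) ` subs \<phi>"
      by (intro image_eqI[of _ _ "Rel R zs"]) auto
  qed
  then show ?thesis by (rule finite_subset) simp
qed

lemma finite_atomsets: "finite atomsets"
  unfolding atomsets_def using finite_Phi_aux by simp

lemma atomsets_finite: "V \<in> atomsets \<Longrightarrow> finite V"
  unfolding atomsets_def by auto

lemma finite_Vs: "finite Vs" unfolding Vs_def by simp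

lemma z0_notin: "z0 \<notin> vars \<phi>"
proof
  assume "z0 \<in> vars \<phi>"
  then have "z0 \<le> Max (insert 0 (vars \<phi>))" by simp
  then show False unfolding z0_def by simp
qed

lemma Q_sub: "Q \<subseteq> (\<lambda>(x, \<psi>, \<chi>, V). (x, THE ys. Exs ys \<chi> = \<psi>, \<chi>, V)) ` (Vs \<times> subs \<phi> \<times> subs \<phi> \<times> atomsets)"
proof
  fix q assume q: "q \<in> Q"
  obtain x ys \<chi> V where qq: "q = (x, ys, \<chi>, V)" by (cases q) auto
  have "Exs ys \<chi> \<in> subs \<phi>" "x \<in> Vs" "V \<in> atomsets" using q qq unfolding Q_def qx0_def qys_def qchi_def qV_def by auto
  moreover have "\<chi> \<in> subs \<phi>" using subs_Exs calculation by blast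
  moreover have "(THE ys'. Exs ys' \<chi> = Exs ys \<chi>) = ys" using Exs_inj by blast
  ultimately show "q \<in> (\<lambda>(x, \<psi>, \<chi>, V). (x, THE ys. Exs ys \<chi> = \<psi>, \<chi>, V)) ` (Vs \<times> subs \<phi> \<times> subs \<phi> \<times> atomsets)"
    unfolding qq by (intro image_eqI[of _ _ "(x, Exs ys \<chi>, \<chi>, V)"]) auto
qed

lemma finite_Q: "finite Q"
proof -
  have "finite (Vs \<times> subs \<phi> \<times> subs \<phi> \<times> atomsets)" using finite_Vs finite_atomsets by simp
  then show ?thesis using Q_sub finite_subset finite_imageI by blast
qed

lemma finite_Phi: "finite Phi"
  unfolding Phi_def using finite_Q by simp

lemma typ_sub: "typ b \<subseteq> Phi" unfolding typ_def by auto

lemma finite_Ty: "finite Ty"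
proof -
  have "Ty \<subseteq> Pow Phi" unfolding Ty_def using typ_sub by auto
  then show ?thesis using finite_Phi finite_subset by blast
qed

lemma rep: "\<tau> \<in> Ty \<Longrightarrow> rep \<tau> \<in> D \<and> typ (rep \<tau>) = \<tau>"
  unfolding rep_def Ty_def by (rule someI_ex) auto

lemma Q_D: "q \<in> Q \<Longrightarrow> Exs (qys q) (qchi q) \<in> subs \<phi> \<and> qx0 q \<in> Vs \<and> qx0 q \<notin> set (qys q) \<and> qV q \<in> atomsets"
  unfolding Q_def by auto

lemma Q_Phi: "q \<in> Q \<Longrightarrow> Exs (qys q) (qchi q) \<in> Phi"
  using Q_D unfolding Phi_def by auto

lemma outf_Phi: "q \<in> Q \<Longrightarrow> outf q \<in> Phi"
  unfolding Phi_def by auto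

lemma in_typ: "\<theta> \<in> Phi \<Longrightarrow> \<theta> \<in> typ b \<longleftrightarrow> sat D I (\<lambda>_. b) \<theta>"
  unfolding typ_def by auto

lemma wit_ex: "q \<in> Q \<Longrightarrow> b \<in> D \<Longrightarrow> Exs (qys q) (qchi q) \<in> typ b \<Longrightarrow> \<exists>w. wit b q w"
proof -
  assume q: "q \<in> Q" and b: "b \<in> D" and t: "Exs (qys q) (qchi q) \<in> typ b"
  then have "sat D I (\<lambda>_. b) (Exs (qys q) (qchi q))" using in_typ Q_Phi by blast
  then obtain w where w: "\<forall>v. v \<notin> set (qys q) \<longrightarrow> w v = b" "\<forall>v\<in>set (qys q). w v \<in> D" "sat D I w (qchi q)"
    unfolding sat_Exs by auto
  then have "wit b q w" unfolding wit_def using b by metis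
  then show ?thesis by blast
qed

lemma Win: "q \<in> Q \<Longrightarrow> b \<in> D \<Longrightarrow> Exs (qys q) (qchi q) \<in> typ b \<Longrightarrow> wit b q (Win b q)"
  unfolding Win_def using wit_ex by (metis someI_ex)

lemma wit_x0: "q \<in> Q \<Longrightarrow> wit b q w \<Longrightarrow> w (qx0 q) = b"
  unfolding wit_def using Q_D by blast

lemma sat_outf: "q \<in> Q \<Longrightarrow> b \<in> D \<Longrightarrow> outf q \<in> typ b \<longleftrightarrow> (\<exists>w. wit b q w \<and> w (qx0 q) \<notin> w ` qV q)"
proof -
  assume q: "q \<in> Q" and b: "b \<in> D"
  have fin: "finite (qV q)" using Q_D[OF q] atomsets_finite by blast
  have "outf q \<in> typ b \<longleftrightarrow> sat D I (\<lambda>_. b) (outf q)" using in_typ outf_Phi q by blast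
  also have "\<dots> \<longleftrightarrow> (\<exists>w. wit b q w \<and> w (qx0 q) \<notin> w ` qV q)"
  proof
    assume "sat D I (\<lambda>_. b) (outf q)"
    then obtain w where w: "\<forall>v. v \<notin> set (qys q) \<longrightarrow> w v = b" "\<forall>v\<in>set (qys q). w v \<in> D"
       "sat D I w (qchi q)" "\<forall>v\<in>qV q. w (qx0 q) \<noteq> w v"
      unfolding outf_def sat_Exs by (auto simp: sat_nin fin)
    then have "wit b q w" unfolding wit_def using b by metis
    then show "\<exists>w. wit b q w \<and> w (qx0 q) \<notin> w ` qV q" using w(4) by blast
  next
    assume "\<exists>w. wit b q w \<and> w (qx0 q) \<notin> w ` qV q"
    then obtain w where w: "wit b q w" "w (qx0 q) \<notin> w ` qV q" by blast
    show "sat D I (\<lambda>_. b) (outf q)" unfolding outf_def sat_Exs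
      using w unfolding wit_def by (intro exI[of _ w]) (auto simp: sat_nin fin)
  qed
  finally show ?thesis .
qed

lemma Wout: "q \<in> Q \<Longrightarrow> \<tau> \<in> Ty \<Longrightarrow> outf q \<in> \<tau> \<Longrightarrow> wit (rep \<tau>) q (Wout \<tau> q) \<and> Wout \<tau> q (qx0 q) \<notin> Wout \<tau> q ` qV q"
  unfolding Wout_def using sat_outf[of q "rep \<tau>"] rep[of \<tau>] by (metis (mono_tags, lifting) someI_ex)

end


context fmp begin

lemma tp_Dn: "c \<in> Dn \<Longrightarrow> tp c \<in> Ty"
  unfolding Dn_def tp_def RareEl_def Ty_def by auto

lemma rho: "c \<in> Dn \<Longrightarrow> rho c \<in> D \<and> typ (rho c) = tp c"
proof -
  assume c: "c \<in> Dn"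
  show ?thesis
  proof (cases c)
    case (Inl d) then show ?thesis using c unfolding Dn_def RareEl_def rho_def tp_def by auto
  next
    case (Inr p)
    then obtain \<tau>' j i where p: "c = Inr (\<tau>', j, i)" "\<tau>' \<in> Ty" using c unfolding Dn_def by auto
    have r: "rep \<tau>' \<in> D \<and> typ (rep \<tau>') = \<tau>'" using rep p by blast
    show ?thesis using r unfolding p rho_def tp_def by (cases i) auto
  qed
qed


lemma set_qys: "q \<in> Q \<Longrightarrow> set (qys q) \<subseteq> Vs"
  using Q_D subs_Exs unfolding Vs_def by blast

lemma wq:
  assumes "reqok c0 q"
  shows "wit (wq c0 q (qx0 q)) q (wq c0 q) \<and> typ (wq c0 q (qx0 q)) = tp c0
    \<and> (\<forall>a. c0 = Inl a \<longrightarrow> wq c0 q (qx0 q) = a)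
    \<and> (\<forall>\<tau> j i. c0 = Inr (\<tau>, j, i) \<longrightarrow> outf q \<in> \<tau> \<longrightarrow> wq c0 q (qx0 q) \<notin> wq c0 q ` qV q \<and> wq c0 q = Wout \<tau> q)
    \<and> (\<forall>\<tau> j i. c0 = Inr (\<tau>, j, i) \<longrightarrow> outf q \<notin> \<tau> \<longrightarrow> wq c0 q (qx0 q) = rho c0 \<and> wq c0 q (qx0 q) \<in> wq c0 q ` qV q)"
proof -
  have c0: "c0 \<in> Dn" and q: "q \<in> Q" and t: "Exs (qys q) (qchi q) \<in> tp c0" using assms unfolding reqok_def by auto
  show ?thesis
  proof (cases c0)
    case (Inl a)
    then have a: "a \<in> D" "tp c0 = typ a" using c0 unfolding Dn_def RareEl_def tp_def by auto
    have w: "wit a q (Win a q)" using Win q a t by auto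
    have "wq c0 q = Win a q" unfolding wq_def Inl by simp
    then show ?thesis using w wit_x0[OF q w] a Inl by auto
  next
    case (Inr p)
    then obtain \<tau> j i where p: "c0 = Inr (\<tau>, j, i)" "\<tau> \<in> Ty" using c0 unfolding Dn_def by auto
    have tpc: "tp c0 = \<tau>" unfolding p tp_def by simp
    show ?thesis
    proof (cases "outf q \<in> \<tau>")
      case True
      have w: "wit (rep \<tau>) q (Wout \<tau> q)" "Wout \<tau> q (qx0 q) \<notin> Wout \<tau> q ` qV q"
        using Wout[OF q p(2) True] by auto
      have e: "wq c0 q = Wout \<tau> q" unfolding wq_def p using True by simp
      show ?thesis using w wit_x0[OF q w(1)] rep[OF p(2)] True p unfolding e tpc by auto
    next
      case False
      have r: "rho c0 \<in> D" "typ (rho c0) = \<tau>" using rho[OF c0] tpc by auto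
      have w: "wit (rho c0) q (Win (rho c0) q)" using Win[OF q r(1)] r t tpc by auto
      have e: "wq c0 q = Win (rho c0) q" unfolding wq_def p using False by simp
      have x0: "Win (rho c0) q (qx0 q) = rho c0" using wit_x0[OF q w] .
      have "Win (rho c0) q (qx0 q) \<in> Win (rho c0) q ` qV q"
      proof (rule ccontr)
        assume "Win (rho c0) q (qx0 q) \<notin> Win (rho c0) q ` qV q"
        then have "outf q \<in> typ (rho c0)" using sat_outf[OF q r(1)] w by blast
        then show False using False r by simp
      qed
      then show ?thesis using w x0 r False p unfolding e tpc by auto
    qed
  qed
qed

lemma wq_D: "reqok c0 q \<Longrightarrow> wq c0 q v \<in> D"
proof -
  assume a: "reqok c0 q"
  have "wit (wq c0 q (qx0 q)) q (wq c0 q)" using wq[OF a(1)] by blast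
  then show ?thesis unfolding wit_def by blast
qed

lemma wq_out: "reqok c0 q \<Longrightarrow> v \<notin> set (qys q) \<Longrightarrow> wq c0 q v = wq c0 q (qx0 q)"
proof -
  assume a: "reqok c0 q" "v \<notin> set (qys q)"
  have "wit (wq c0 q (qx0 q)) q (wq c0 q)" using wq[OF a(1)] by blast
  then show ?thesis using a(2) unfolding wit_def by blast
qed

lemma wq_sat: "reqok c0 q \<Longrightarrow> sat D I (wq c0 q) (qchi q)"
proof -
  assume a: "reqok c0 q"
  have "wit (wq c0 q (qx0 q)) q (wq c0 q)" using wq[OF a(1)] by blast
  then show ?thesis unfolding wit_def by blast
qed

lemma canon:
  assumes "reqok c0 q" "wq c0 q v \<noteq> wq c0 q (qx0 q)"
  shows "canon (wq c0 q) (qys q) v \<in> set (qys q) \<and> wq c0 q (canon (wq c0 q) (qys q) v) = wq c0 q v"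
proof -
  have "v \<in> set (qys q)" using wq_out assms by blast
  then show ?thesis unfolding canon_def using LeastI[of "\<lambda>u. u \<in> set (qys q) \<and> wq c0 q u = wq c0 q v" v] by simp
qed

lemma smod: "Suc j mod 3 \<noteq> j"
proof (cases "j < 3")
  case True then have "j = 0 \<or> j = 1 \<or> j = 2" by auto
  then show ?thesis by auto
next
  case False then show ?thesis using mod_less_divisor[of 3 "Suc j"] by auto
qed

lemma IdxS_I: "q \<in> Q \<Longrightarrow> v \<in> Vs \<Longrightarrow> IIn q v \<in> IdxS"
  "\<tau> \<in> Ty \<Longrightarrow> q \<in> Q \<Longrightarrow> v \<in> Vs \<Longrightarrow> IOut \<tau> q v \<in> IdxS"
  "a \<in> RareEl \<Longrightarrow> q \<in> Q \<Longrightarrow> v \<in> Vs \<Longrightarrow> IRare a q v \<in> IdxS"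
  "v \<in> Vs \<Longrightarrow> IPlain v \<in> IdxS"
  unfolding IdxS_def by force+

lemma Dn_I1: "\<tau> \<in> Ty \<Longrightarrow> \<not> rare \<tau> \<Longrightarrow> j < 3 \<Longrightarrow> i \<in> IdxS \<Longrightarrow> Inr (\<tau>, j, i) \<in> Dn"
proof -
  assume a: "\<tau> \<in> Ty" "\<not> rare \<tau>" "j < 3" "i \<in> IdxS"
  have "(\<tau>, j, i) \<in> {(\<tau>, j, i). \<tau> \<in> Ty \<and> \<not> rare \<tau> \<and> j < 3 \<and> i \<in> IdxS}" using a by simp
  then show ?thesis unfolding Dn_def by blast
qed

lemma Dn_I2: "a \<in> RareEl \<Longrightarrow> Inl a \<in> Dn"
  unfolding Dn_def by blast

lemmas Dn_I = Dn_I1 Dn_I2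

lemma cbar_x0: "cbar c0 q (qx0 q) = c0"
  unfolding cbar_def by simp

lemma cbar_in:
  assumes "reqok c0 q"
  shows "cbar c0 q v \<in> Dn"
proof -
  let ?w = "wq c0 q"
  have c0: "c0 \<in> Dn" and q: "q \<in> Q" using assms unfolding reqok_def by auto
  have wD: "?w v \<in> D" using wq_D assms by blast
  show ?thesis
  proof (cases "?w v = ?w (qx0 q)")
    case True then show ?thesis using c0 unfolding cbar_def by simp
  next
    case False
    note cn = canon[OF assms False]
    have cV: "canon ?w (qys q) v \<in> Vs" using cn set_qys q by blast
    show ?thesis
    proof (cases "rare (typ (?w v))")
      case True then show ?thesis using False wD unfolding cbar_def Dn_def RareEl_def by (simp add: Let_def)
    next
      case nr: False
      have ty: "typ (?w v) \<in> Ty" using wD unfolding Ty_def by simp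
      have "pool c0 q (typ (?w v)) (canon ?w (qys q) v) \<in> Dn"
      proof (cases c0)
        case (Inl a)
        then have "a \<in> RareEl" using c0 unfolding Dn_def by auto
        then show ?thesis using Inl ty nr cV q unfolding pool_def by (simp add: Dn_I IdxS_I)
      next
        case (Inr p)
        then obtain \<tau> j i where p: "c0 = Inr (\<tau>, j, i)" "\<tau> \<in> Ty" using c0 unfolding Dn_def by auto
        then show ?thesis using ty nr cV q unfolding pool_def by (simp add: Dn_I IdxS_I)
      qed
      then show ?thesis using False nr unfolding cbar_def by (simp add: Let_def)
    qed
  qed
qed

lemma cbar_tp:
  assumes "reqok c0 q"
  shows "tp (cbar c0 q v) = typ (wq c0 q v)"
proof -
  have "typ (wq c0 q (qx0 q)) = tp c0" using wq[OF assms] by blast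
  then show ?thesis unfolding cbar_def pool_def tp_def
    by (auto simp: Let_def split: sum.splits prod.splits)
qed

lemma cbar_eq:
  assumes "reqok c0 q"
  shows "cbar c0 q v = cbar c0 q u \<longleftrightarrow> wq c0 q v = wq c0 q u"
proof
  assume "wq c0 q v = wq c0 q u"
  then show "cbar c0 q v = cbar c0 q u"
  proof -
    assume e: "wq c0 q v = wq c0 q u"
    have "canon (wq c0 q) (qys q) v = canon (wq c0 q) (qys q) u" unfolding canon_def e by simp
    then show ?thesis unfolding cbar_def using e by (simp add: Let_def)
  qed
next
  let ?w = "wq c0 q"
  assume eq: "cbar c0 q v = cbar c0 q u"
  have x0a: "\<forall>a. c0 = Inl a \<longrightarrow> ?w (qx0 q) = a" using wq[OF assms] by blast
  show "?w v = ?w u"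
  proof (rule ccontr)
    assume ne: "?w v \<noteq> ?w u"
    have pgrp: "\<And>\<tau>' v'. pool c0 q \<tau>' v' \<noteq> c0"
      unfolding pool_def by (auto simp: smod split: sum.splits prod.splits)
    have pinl: "\<And>\<tau>' v' d. pool c0 q \<tau>' v' \<noteq> Inl d"
      unfolding pool_def by (auto split: sum.splits prod.splits)
    have pinj: "\<And>\<tau>1 \<tau>2 v1 v2. pool c0 q \<tau>1 v1 = pool c0 q \<tau>2 v2 \<Longrightarrow> v1 = v2"
      unfolding pool_def by (auto split: sum.splits prod.splits if_splits)
    consider (a) "?w v = ?w (qx0 q)" | (b) "?w u = ?w (qx0 q)" | (c) "?w v \<noteq> ?w (qx0 q)" "?w u \<noteq> ?w (qx0 q)"
      by blast
    then show False
    proof cases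
      case a
      then have u: "?w u \<noteq> ?w (qx0 q)" using ne by simp
      have "cbar c0 q u = c0" using eq a unfolding cbar_def by (simp add: Let_def)
      then have "c0 = Inl (?w u)" using u pgrp unfolding cbar_def by (auto simp: Let_def split: if_splits)
      then show False using x0a u by metis
    next
      case b
      then have v: "?w v \<noteq> ?w (qx0 q)" using ne by simp
      have "cbar c0 q v = c0" using eq b unfolding cbar_def by (simp add: Let_def)
      then have "c0 = Inl (?w v)" using v pgrp unfolding cbar_def by (auto simp: Let_def split: if_splits)
      then show False using x0a v by metis
    next
      case c
      have cv: "wq c0 q (canon ?w (qys q) v) = ?w v" using canon[OF assms c(1)] by blast
      have cu: "wq c0 q (canon ?w (qys q) u) = ?w u" using canon[OF assms c(2)] by blast
      have ev: "cbar c0 q v = (if rare (typ (?w v)) then Inl (?w v) else pool c0 q (typ (?w v)) (canon ?w (qys q) v))"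
        using c(1) unfolding cbar_def by (simp add: Let_def)
      have eu: "cbar c0 q u = (if rare (typ (?w u)) then Inl (?w u) else pool c0 q (typ (?w u)) (canon ?w (qys q) u))"
        using c(2) unfolding cbar_def by (simp add: Let_def)
      show False
      proof (cases "rare (typ (?w v))"; cases "rare (typ (?w u))")
        assume "rare (typ (?w v))" "rare (typ (?w u))" then show False using eq ev eu ne by simp
      next
        assume "rare (typ (?w v))" "\<not> rare (typ (?w u))" then show False using eq ev eu pinl by metis
      next
        assume "\<not> rare (typ (?w v))" "rare (typ (?w u))" then show False using eq ev eu pinl by metis
      next
        assume "\<not> rare (typ (?w v))" "\<not> rare (typ (?w u))"
        then have "canon ?w (qys q) v = canon ?w (qys q) u" using eq ev eu pinj by metis
        then show False using cv cu ne by metis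
      qed
    qed
  qed
qed

end


context fmp begin

lemma cbar_cases: "cbar c0 q v = c0 \<or> (\<exists>d. cbar c0 q v = Inl d) \<or>
    cbar c0 q v = pool c0 q (typ (wq c0 q v)) (canon (wq c0 q) (qys q) v)"
  unfolding cbar_def Let_def by simp

lemma grp_pool: "c0 = Inl a \<Longrightarrow> grp (pool c0 q \<tau>' v) = Some 0"
  "c0 = Inr (\<tau>, j, i) \<Longrightarrow> grp (pool c0 q \<tau>' v) = Some (Suc j mod 3)"
  unfolding pool_def grp_def by simp_all

lemma pool_In: "c0 = Inr (\<tau>, j, i) \<Longrightarrow> outf q \<notin> \<tau> \<Longrightarrow> pool c0 q \<tau>' v = Inr (\<tau>', Suc j mod 3, IIn q v)"
  unfolding pool_def by simp

lemma Dn_grp: "c \<in> Dn \<Longrightarrow> grp c = Some k \<Longrightarrow> k < 3"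
  unfolding Dn_def grp_def by auto

lemma ownedBy_D: "ownedBy E (c0, q) \<Longrightarrow> reqok c0 q \<and>
   (\<exists>\<tau> j i. c0 = Inr (\<tau>, j, i) \<and> outf q \<notin> \<tau> \<and> (\<exists>e\<in>E. grp e = Some (Suc j mod 3)))
   \<and> E = cbar c0 q ` qV q \<and> c0 \<in> E"
  unfolding ownedBy_def prod.case by assumption

lemma owned_groups:
  assumes "ownedBy E r"
  shows "\<exists>k. (\<exists>e\<in>E. grp e = Some k) \<and> (\<exists>e\<in>E. grp e = Some (Suc k mod 3))"
proof -
  obtain c1 q1 where r: "r = (c1, q1)" by (cases r)
  from ownedBy_D[OF assms[unfolded r]] obtain \<tau> j i where c1: "c1 = Inr (\<tau>, j, i)" "\<exists>e\<in>E. grp e = Some (Suc j mod 3)" "c1 \<in> E"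
    by blast
  have "grp c1 = Some j" unfolding c1 grp_def by simp
  then show ?thesis using c1 by blast
qed

lemma not_owned:
  assumes "\<forall>e\<in>E. grp e = None \<or> grp e = Some k"
  shows "\<not> ownedBy E r"
proof
  assume "ownedBy E r"
  then obtain k' e1 e2 where e: "e1 \<in> E" "grp e1 = Some k'" "e2 \<in> E" "grp e2 = Some (Suc k' mod 3)"
    using owned_groups by blast
  have "k' = k" using assms e by force
  moreover have "Suc k' mod 3 = k" using assms e by force
  ultimately show False using smod by blast
qed

lemma owned_struct:
  assumes "ownedBy E (c0, q)" "c0 = Inr (\<tau>, j, i)"
  shows "outf q \<notin> \<tau> \<and> (\<forall>e\<in>E. e = c0 \<or> grp e = None \<or> (\<exists>\<tau>' v. e = Inr (\<tau>', Suc j mod 3, IIn q v)))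
     \<and> (\<exists>e\<in>E. grp e = Some (Suc j mod 3)) \<and> c0 \<in> E \<and> j < 3"
proof -
  have o: "outf q \<notin> \<tau>" "\<exists>e\<in>E. grp e = Some (Suc j mod 3)" "E = cbar c0 q ` qV q" "c0 \<in> E" "reqok c0 q"
    using ownedBy_D[OF assms(1)] assms(2) by auto
  have "\<forall>e\<in>E. e = c0 \<or> grp e = None \<or> (\<exists>\<tau>' v. e = Inr (\<tau>', Suc j mod 3, IIn q v))"
  proof
    fix e assume "e \<in> E"
    then obtain v where "e = cbar c0 q v" using o(3) by blast
    then show "e = c0 \<or> grp e = None \<or> (\<exists>\<tau>' v. e = Inr (\<tau>', Suc j mod 3, IIn q v))"
      using cbar_cases[of c0 q v] pool_In[OF assms(2) o(1)] unfolding grp_def by fastforce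
  qed
  moreover have "j < 3" using o(5) assms(2) Dn_grp[of c0 j] unfolding reqok_def grp_def by simp
  ultimately show ?thesis using o by blast
qed

lemma owned_unique:
  assumes "ownedBy E r" "ownedBy E r'"
  shows "r = r'"
proof -
  obtain c0 q where r: "r = (c0, q)" by (cases r)
  obtain c0' q' where r': "r' = (c0', q')" by (cases r')
  obtain \<tau> j i where c0: "c0 = Inr (\<tau>, j, i)" using ownedBy_D assms(1) unfolding r by blast
  obtain \<tau>2 j2 i2 where c0': "c0' = Inr (\<tau>2, j2, i2)" using ownedBy_D assms(2) unfolding r' by blast
  note s1 = owned_struct[OF assms(1)[unfolded r] c0]
  note s2 = owned_struct[OF assms(2)[unfolded r'] c0']
  have g0: "grp c0 = Some j" "grp c0' = Some j2" unfolding c0 c0' grp_def by auto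
  have "c0 = c0'"
  proof (rule ccontr)
    assume ne: "c0 \<noteq> c0'"
    have "c0' \<in> E" using s2 by blast
    then have "c0' = c0 \<or> grp c0' = None \<or> (\<exists>\<tau>' v. c0' = Inr (\<tau>', Suc j mod 3, IIn q v))" using s1 by blast
    moreover have "grp c0' \<noteq> None" using g0 by simp
    ultimately have "\<exists>\<tau>' v. c0' = Inr (\<tau>', Suc j mod 3, IIn q v)" using ne by blast
    then obtain ta va where "c0' = Inr (ta, Suc j mod 3, IIn q va)" by blast
    then have a: "j2 = Suc j mod 3" using c0' by simp
    have "c0 \<in> E" using s1 by blast
    then have "c0 = c0' \<or> grp c0 = None \<or> (\<exists>\<tau>' v. c0 = Inr (\<tau>', Suc j2 mod 3, IIn q' v))" using s2 by blast
    moreover have "grp c0 \<noteq> None" using g0 by simp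
    ultimately have "\<exists>\<tau>' v. c0 = Inr (\<tau>', Suc j2 mod 3, IIn q' v)" using ne by metis
    then obtain tb vb where "c0 = Inr (tb, Suc j2 mod 3, IIn q' vb)" by blast
    then have b: "j = Suc j2 mod 3" using c0 by simp
    have "j < 3" using s1 by blast
    then show False using a b by presburger
  qed
  moreover have "q = q'"
  proof -
    obtain e where e: "e \<in> E" "grp e = Some (Suc j mod 3)" using s1 by blast
    have ne: "e \<noteq> c0" using e(2) g0(1) smod[of j] by auto
    have "e = c0 \<or> grp e = None \<or> (\<exists>\<tau>' v. e = Inr (\<tau>', Suc j mod 3, IIn q v))" using s1 e by blast
    then obtain \<tau>1 v1 where e1: "e = Inr (\<tau>1, Suc j mod 3, IIn q v1)" using ne e(2) by (metis option.distinct(1))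
    have "e \<noteq> c0'" using ne \<open>c0 = c0'\<close> by simp
    moreover have "e = c0' \<or> grp e = None \<or> (\<exists>\<tau>' v. e = Inr (\<tau>', Suc j2 mod 3, IIn q' v))" using s2 e by blast
    ultimately obtain \<tau>3 v3 where "e = Inr (\<tau>3, Suc j2 mod 3, IIn q' v3)" using e(2) by (metis option.distinct(1))
    then show ?thesis using e1 by simp
  qed
  ultimately show ?thesis unfolding r r' by simp
qed

lemma fE_owned: "ownedBy E r \<Longrightarrow> fE E = hfun r"
  unfolding fE_def using owned_unique by (metis (mono_tags, lifting) someI_ex)

lemma hfun_cbar: "reqok c0 q \<Longrightarrow> hfun (c0, q) (cbar c0 q v) = wq c0 q v"
proof -
  assume a: "reqok c0 q"
  have "cbar c0 q (SOME u. cbar c0 q u = cbar c0 q v) = cbar c0 q v" by (rule someI[of _ v]) (rule refl)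
  then have "wq c0 q (SOME u. cbar c0 q u = cbar c0 q v) = wq c0 q v" using cbar_eq[OF a] by blast
  then show ?thesis unfolding hfun_def by simp
qed

lemma rho_cbar:
  assumes a: "reqok c0 q" and v: "wq c0 q v \<noteq> wq c0 q (qx0 q)"
    and h: "\<And>\<tau> j i. c0 = Inr (\<tau>, j, i) \<Longrightarrow> outf q \<notin> \<tau> \<Longrightarrow> grp (cbar c0 q v) \<noteq> Some (Suc j mod 3)"
  shows "rho (cbar c0 q v) = wq c0 q v"
proof -
  let ?w = "wq c0 q"
  let ?v' = "canon ?w (qys q) v"
  have cn: "?w ?v' = ?w v" using canon[OF a v] by blast
  have wD: "?w v \<in> D" using wq_D[OF a] by blast
  show ?thesis
  proof (cases "rare (typ (?w v))")
    case True
    then show ?thesis using v unfolding cbar_def rho_def by (simp add: Let_def)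
  next
    case False
    then have cb: "cbar c0 q v = pool c0 q (typ (?w v)) ?v'" using v unfolding cbar_def by (simp add: Let_def)
    show ?thesis
    proof (cases c0)
      case (Inl a')
      then have e: "?w = Win a' q" unfolding wq_def by simp
      have "cbar c0 q v = Inr (typ (?w v), 0, IRare a' q ?v')" using cb unfolding pool_def Inl by simp
      moreover have "rho (Inr (typ (?w v), 0, IRare a' q ?v')) = (if Win a' q ?v' \<in> D \<and> typ (Win a' q ?v') = typ (?w v) then Win a' q ?v' else rep (typ (?w v)))"
        by (simp add: rho_def)
      ultimately show ?thesis using cn wD e by simp
    next
      case (Inr p)
      then obtain \<tau> j i where p: "c0 = Inr (\<tau>, j, i)" by (cases p) auto
      show ?thesis
      proof (cases "outf q \<in> \<tau>")
        case True
        then have e: "?w = Wout \<tau> q" unfolding wq_def p by simp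
        have "cbar c0 q v = Inr (typ (?w v), Suc j mod 3, IOut \<tau> q ?v')" using cb True unfolding pool_def p by simp
        moreover have "rho (Inr (typ (?w v), Suc j mod 3, IOut \<tau> q ?v')) = (if Wout \<tau> q ?v' \<in> D \<and> typ (Wout \<tau> q ?v') = typ (?w v) then Wout \<tau> q ?v' else rep (typ (?w v)))"
          by (simp add: rho_def)
        ultimately show ?thesis using cn wD e by simp
      next
        case False
        then have "grp (cbar c0 q v) \<noteq> Some (Suc j mod 3)" using h p by blast
        moreover have "grp (cbar c0 q v) = Some (Suc j mod 3)" unfolding cb by (rule grp_pool(2)[OF p])
        ultimately show ?thesis by blast
      qed
    qed
  qed
qed

lemma rho_cbar0:
  assumes a: "reqok c0 q" and v: "wq c0 q v = wq c0 q (qx0 q)"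
    and h: "\<And>\<tau> j i. c0 = Inr (\<tau>, j, i) \<Longrightarrow> outf q \<notin> \<tau>"
  shows "rho (cbar c0 q v) = wq c0 q v"
proof -
  have cb: "cbar c0 q v = c0" using v unfolding cbar_def by (simp add: Let_def)
  note W = wq[OF a]
  show ?thesis
  proof (cases c0)
    case (Inl a') then show ?thesis using cb W v unfolding rho_def by simp
  next
    case (Inr p)
    then obtain \<tau> j i where p: "c0 = Inr (\<tau>, j, i)" by (cases p) auto
    then show ?thesis using cb W v h by simp
  qed
qed

lemma wq_In: "reqok c0 q \<Longrightarrow> c0 = Inr (\<tau>, j, i) \<Longrightarrow> outf q \<notin> \<tau> \<Longrightarrow>
   wq c0 q (qx0 q) = rho c0 \<and> wq c0 q (qx0 q) \<in> wq c0 q ` qV q"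
proof -
  assume a: "reqok c0 q" "c0 = Inr (\<tau>, j, i)" "outf q \<notin> \<tau>"
  show ?thesis using wq[OF a(1), THEN conjunct2, THEN conjunct2, THEN conjunct2, THEN conjunct2, rule_format, OF a(2) a(3)] .
qed

lemma wq_Out: "reqok c0 q \<Longrightarrow> c0 = Inr (\<tau>, j, i) \<Longrightarrow> outf q \<in> \<tau> \<Longrightarrow>
   wq c0 q (qx0 q) \<notin> wq c0 q ` qV q \<and> wq c0 q = Wout \<tau> q"
proof -
  assume a: "reqok c0 q" "c0 = Inr (\<tau>, j, i)" "outf q \<in> \<tau>"
  show ?thesis using wq[OF a(1), THEN conjunct2, THEN conjunct2, THEN conjunct2, THEN conjunct1, rule_format, OF a(2) a(3)] .
qed

lemma fE_req:
  assumes a: "reqok c0 q" and vV: "v \<in> qV q"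
  shows "fE (cbar c0 q ` qV q) (cbar c0 q v) = wq c0 q v"
proof -
  let ?E = "cbar c0 q ` qV q"
  let ?w = "wq c0 q"
  note W = wq[OF a]
  show ?thesis
  proof (cases "\<exists>\<tau> j i. c0 = Inr (\<tau>, j, i) \<and> outf q \<notin> \<tau> \<and> (\<exists>e\<in>?E. grp e = Some (Suc j mod 3))")
    case True
    then obtain \<tau> j i where p: "c0 = Inr (\<tau>, j, i)" "outf q \<notin> \<tau>" by blast
    have "?w (qx0 q) \<in> ?w ` qV q" using wq_In[OF a p] by blast
    then obtain u where u: "u \<in> qV q" "?w u = ?w (qx0 q)" by auto
    have "c0 \<in> ?E" using u cbar_eq[OF a, of u "qx0 q"] cbar_x0[of c0 q] by (metis image_eqI)
    then have "ownedBy ?E (c0, q)" using True a unfolding ownedBy_def by blast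
    then show ?thesis using fE_owned hfun_cbar[OF a] by simp
  next
    case False
    have rc: "rho (cbar c0 q u) = ?w u" if u: "u \<in> qV q" for u
    proof (cases "?w u = ?w (qx0 q)")
      case True
      show ?thesis
      proof (rule rho_cbar0[OF a True])
        fix \<tau> j i assume p: "c0 = Inr (\<tau>, j, i)"
        show "outf q \<notin> \<tau>"
        proof
          assume "outf q \<in> \<tau>"
          then have "?w (qx0 q) \<notin> ?w ` qV q" using wq_Out[OF a p] by blast
          then show False using u True by (metis image_eqI)
        qed
      qed
    next
      case ne: False
      show ?thesis
      proof (rule rho_cbar[OF a ne])
        fix \<tau> j i assume p: "c0 = Inr (\<tau>, j, i)" "outf q \<notin> \<tau>"
        show "grp (cbar c0 q u) \<noteq> Some (Suc j mod 3)" using False p u by blast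
      qed
    qed
    have inj: "inj_on rho ?E"
    proof (rule inj_onI)
      fix x y assume "x \<in> ?E" "y \<in> ?E" "rho x = rho y"
      then obtain u1 u2 where "u1 \<in> qV q" "u2 \<in> qV q" "x = cbar c0 q u1" "y = cbar c0 q u2" "rho x = rho y" by blast
      then show "x = y" using rc cbar_eq[OF a] by metis
    qed
    have sg: "\<exists>k. \<forall>e\<in>?E. grp e = None \<or> grp e = Some k"
    proof (cases c0)
      case (Inl a')
      have "\<forall>e\<in>?E. grp e = None \<or> grp e = Some 0"
      proof
        fix e assume "e \<in> ?E"
        then obtain u where "e = cbar c0 q u" by blast
        then show "grp e = None \<or> grp e = Some 0"
          using cbar_cases[of c0 q u] grp_pool(1)[OF Inl] Inl unfolding grp_def by fastforce
      qed
      then show ?thesis by blast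
    next
      case (Inr p)
      then obtain \<tau> j i where p: "c0 = Inr (\<tau>, j, i)" by (cases p) auto
      show ?thesis
      proof (cases "outf q \<in> \<tau>")
        case True
        have "\<forall>e\<in>?E. grp e = None \<or> grp e = Some (Suc j mod 3)"
        proof
          fix e assume "e \<in> ?E"
          then obtain u where u: "u \<in> qV q" "e = cbar c0 q u" by blast
          have "?w (qx0 q) \<notin> ?w ` qV q" using wq_Out[OF a p True] by blast
          then have "e \<noteq> c0" using u cbar_eq[OF a, of u "qx0 q"] cbar_x0[of c0 q] by (metis image_eqI)
          then show "grp e = None \<or> grp e = Some (Suc j mod 3)"
            using cbar_cases[of c0 q u] grp_pool(2)[OF p] u unfolding grp_def by fastforce
        qed
        then show ?thesis by blast
      next
        case nin: False
        have "\<forall>e\<in>?E. grp e = None \<or> grp e = Some j"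
        proof
          fix e assume "e \<in> ?E"
          then obtain u where u: "u \<in> qV q" "e = cbar c0 q u" by blast
          have "grp e \<noteq> Some (Suc j mod 3)" using False p nin u by blast
          then show "grp e = None \<or> grp e = Some j"
            using cbar_cases[of c0 q u] grp_pool(2)[OF p] u p unfolding grp_def by fastforce
        qed
        then show ?thesis by blast
      qed
    qed
    have "\<not> (\<exists>r. ownedBy ?E r)" using sg not_owned by blast
    then have "fE ?E = rho" unfolding fE_def using inj by simp
    then show ?thesis using rc vV by simp
  qed
qed

end


context fmp begin

lemma rare_class: "rare \<tau> \<Longrightarrow> {c \<in> Dn. tp c = \<tau>} = Inl ` cnt \<tau>" (is "_ \<Longrightarrow> ?L = ?R")
proof
  assume r: "rare \<tau>"
  show "?L \<subseteq> ?R"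
  proof
    fix c assume c: "c \<in> ?L"
    show "c \<in> ?R"
    proof (cases c)
      case (Inl d)
      then have "d \<in> RareEl" using c unfolding Dn_def by auto
      then have "d \<in> cnt \<tau>" using c Inl unfolding RareEl_def cnt_def tp_def by auto
      then show ?thesis using Inl by blast
    next
      case (Inr p)
      then obtain \<tau>' j i where p: "c = Inr (\<tau>', j, i)" "\<not> rare \<tau>'" using c unfolding Dn_def by auto
      then have "tp c = \<tau>'" unfolding tp_def by simp
      then show ?thesis using c p r by simp
    qed
  qed
next
  assume r: "rare \<tau>"
  show "?R \<subseteq> ?L"
  proof
    fix c assume "c \<in> ?R"
    then obtain d where d: "c = Inl d" "d \<in> D" "typ d = \<tau>" unfolding cnt_def by auto
    then have "d \<in> RareEl" using r unfolding RareEl_def by simp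
    then show "c \<in> ?L" using d Dn_I2 unfolding tp_def by simp
  qed
qed

lemma ext_step:
  assumes B: "finite B" "B \<subseteq> Dn" "card B < n0" and c: "c \<in> Dn" "c \<notin> B" and g: "good h B"
    and cls: "rare (tp c) \<Longrightarrow> card {x \<in> B. tp x = tp c} < card (cnt (tp c))"
  shows "\<exists>d. d \<in> cnt (tp c) \<and> d \<notin> h ` B"
proof -
  let ?\<tau> = "tp c"
  have used: "h ` B \<inter> cnt ?\<tau> \<subseteq> h ` {x \<in> B. tp x = ?\<tau>}"
  proof
    fix y assume "y \<in> h ` B \<inter> cnt ?\<tau>"
    then obtain x where x: "x \<in> B" "y = h x" "typ y = ?\<tau>" unfolding cnt_def by auto
    then have "tp x = ?\<tau>" using g unfolding good_def by auto
    then show "y \<in> h ` {x \<in> B. tp x = ?\<tau>}" using x by blast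
  qed
  show ?thesis
  proof (cases "rare ?\<tau>")
    case True
    have fin: "finite (cnt ?\<tau>)" using True unfolding rare_def by simp
    have "card (h ` B \<inter> cnt ?\<tau>) \<le> card (h ` {x \<in> B. tp x = ?\<tau>})"
      using used B(1) by (intro card_mono) auto
    also have "\<dots> \<le> card {x \<in> B. tp x = ?\<tau>}" using B(1) by (intro card_image_le) simp
    also have "\<dots> < card (cnt ?\<tau>)" using cls True by blast
    finally have "\<not> cnt ?\<tau> \<subseteq> h ` B \<inter> cnt ?\<tau>"
      using fin by (metis card_mono not_le inf.cobounded1 finite_Int)
    then show ?thesis by blast
  next
    case False
    show ?thesis
    proof (cases "finite (cnt ?\<tau>)")
      case True
      then have "card (cnt ?\<tau>) \<ge> n0" using False unfolding rare_def by simp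
      moreover have "card (h ` B) \<le> card B" using B(1) card_image_le by blast
      ultimately have "card (h ` B) < card (cnt ?\<tau>)" using B(3) by simp
      then have "\<not> cnt ?\<tau> \<subseteq> h ` B" using B(1) by (meson card_mono finite_imageI not_le)
      then show ?thesis by blast
    next
      case False
      then have "\<not> cnt ?\<tau> \<subseteq> h ` B" using B(1) by (meson finite_imageI rev_finite_subset)
      then show ?thesis by blast
    qed
  qed
qed

lemma extend:
  assumes S: "finite S" "S \<subseteq> Dn" "card S \<le> n0" and E: "E \<subseteq> S" and g: "good f E"
  shows "\<exists>h. good h S \<and> (\<forall>c\<in>E. h c = f c)"
proof -
  have "\<forall>A. finite A \<longrightarrow> A \<subseteq> S - E \<longrightarrow> (\<exists>h. good h (E \<union> A) \<and> (\<forall>c\<in>E. h c = f c))"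
  proof (intro allI impI)
    fix A :: "('a + fm set \<times> nat \<times> 'a idx) set"
    assume "finite A" "A \<subseteq> S - E"
    then show "\<exists>h. good h (E \<union> A) \<and> (\<forall>c\<in>E. h c = f c)"
    proof (induction A rule: finite_induct)
      case empty then show ?case using g by auto
    next
      case (insert c A)
      then obtain h where h: "good h (E \<union> A)" "\<forall>c\<in>E. h c = f c" by blast
      let ?B = "E \<union> A"
      have cS: "c \<in> S" "c \<notin> ?B" using insert by auto
      have BS: "?B \<subseteq> S" using insert E by auto
      have fB: "finite ?B" by (rule finite_subset[OF BS S(1)])
      have "?B \<subset> S" using cS BS by blast
      then have cardB: "card ?B < card S" by (rule psubset_card_mono[OF S(1)])
      have cls: "card {x \<in> ?B. tp x = tp c} < card (cnt (tp c))" if r: "rare (tp c)"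
      proof -
        have fin: "finite (cnt (tp c))" using r unfolding rare_def by simp
        have "insert c {x \<in> ?B. tp x = tp c} \<subseteq> {x \<in> Dn. tp x = tp c}" using BS S(2) cS by auto
        also have "\<dots> = Inl ` cnt (tp c)" using rare_class r by blast
        finally have "card (insert c {x \<in> ?B. tp x = tp c}) \<le> card (Inl ` cnt (tp c) :: 'a el set)"
          using fin by (intro card_mono) simp_all
        moreover have "card (Inl ` cnt (tp c) :: 'a el set) = card (cnt (tp c))" by (simp add: card_image)
        moreover have "card (insert c {x \<in> ?B. tp x = tp c}) = Suc (card {x \<in> ?B. tp x = tp c})"
          using fB cS(2) by simp
        ultimately show ?thesis by simp
      qed
      have BD: "?B \<subseteq> Dn" using BS S(2) by (rule order_trans)
      have cB: "card ?B < n0" using cardB S(3) by simp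
      have cD: "c \<in> Dn" using cS(1) S(2) by blast
      obtain d where d: "d \<in> cnt (tp c)" "d \<notin> h ` ?B"
        using ext_step[OF fB BD cB cD cS(2) h(1) cls] by blast
      let ?h = "h(c := d)"
      have eqB: "\<forall>x\<in>?B. ?h x = h x" using cS(2) by simp
      have injB: "inj_on ?h ?B" using h(1) d(2) unfolding good_def by (intro inj_on_fun_updI) simp_all
      have imB: "?h ` ?B = h ` ?B" using eqB by (intro image_cong) auto
      have Bc: "?B - {c} = ?B" using cS(2) by blast
      have "?h c \<notin> ?h ` (?B - {c})" unfolding Bc imB using d(2) by simp
      then have inj: "inj_on ?h (insert c ?B)" using injB inj_on_insert by blast
      have ty: "\<forall>x\<in>insert c ?B. ?h x \<in> D \<and> typ (?h x) = tp x"
        using h(1) d(1) eqB unfolding good_def cnt_def by auto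
      have "good ?h (E \<union> insert c A)" using inj ty unfolding good_def by simp
      moreover have "\<forall>x\<in>E. ?h x = f x" using h(2) insert(4) by auto
      ultimately show ?case by blast
    qed
  qed
  moreover have "finite (S - E)" using S(1) by simp
  ultimately obtain h where "good h (E \<union> (S - E))" "\<forall>c\<in>E. h c = f c" by blast
  moreover have "E \<union> (S - E) = S" using E by blast
  ultimately show ?thesis by auto
qed

lemma good_hfun:
  assumes "reqok c0 q"
  shows "good (hfun (c0, q)) (cbar c0 q ` V)"
proof -
  have inj: "inj_on (hfun (c0, q)) (cbar c0 q ` V)"
  proof (rule inj_onI)
    fix x y assume "x \<in> cbar c0 q ` V" "y \<in> cbar c0 q ` V" "hfun (c0, q) x = hfun (c0, q) y"
    then obtain u1 u2 where "x = cbar c0 q u1" "y = cbar c0 q u2" "hfun (c0, q) x = hfun (c0, q) y" by blast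
    then show "x = y" using hfun_cbar[OF assms] cbar_eq[OF assms] by metis
  qed
  have "\<forall>x\<in>cbar c0 q ` V. hfun (c0, q) x \<in> D \<and> typ (hfun (c0, q) x) = tp x"
    using hfun_cbar[OF assms] wq_D[OF assms] cbar_tp[OF assms] by auto
  then show ?thesis using inj unfolding good_def by blast
qed

lemma fE_good:
  assumes E: "finite E" "E \<subseteq> Dn" "card E \<le> n0"
  shows "good (fE E) E"
proof (cases "\<exists>r. ownedBy E r")
  case True
  then obtain c0 q where o: "ownedBy E (c0, q)" by auto
  then have "fE E = hfun (c0, q)" using fE_owned by blast
  moreover have "reqok c0 q" "E = cbar c0 q ` qV q" using ownedBy_D[OF o] by auto
  ultimately show ?thesis using good_hfun by simp
next
  case False
  show ?thesis
  proof (cases "inj_on rho E")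
    case True
    then have "fE E = rho" using False unfolding fE_def by simp
    then show ?thesis using True rho E(2) unfolding good_def by auto
  next
    case ni: False
    then have e: "fE E = (SOME f. good f E)" using False unfolding fE_def by simp
    have "\<exists>f. good f E" using extend[OF E, of "{}" rho] unfolding good_def by auto
    then show ?thesis unfolding e by (rule someI_ex)
  qed
qed

lemma fE_single:
  assumes "c \<in> Dn"
  shows "fE {c} = rho"
proof -
  have "\<forall>e\<in>{c}. grp e = None \<or> grp e = Some (the (grp c))" by (cases "grp c") auto
  then have "\<not> (\<exists>r. ownedBy {c} r)" using not_owned by blast
  then show ?thesis unfolding fE_def by simp
qed

end


lemma q_simps[simp]: "qx0 (x0, ys, \<chi>, V) = x0" "qys (x0, ys, \<chi>, V) = ys" "qchi (x0, ys, \<chi>, V) = \<chi>" "qV (x0, ys, \<chi>, V) = V"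
  unfolding qx0_def qys_def qchi_def qV_def by simp_all

context fmp begin

definition "agree \<psi> = (\<forall>\<alpha> \<beta>. (\<forall>x. \<alpha> x \<in> Dn) \<longrightarrow> (\<forall>x. \<beta> x \<in> D) \<longrightarrow>
   (\<forall>x\<in>fv \<psi>. \<forall>y\<in>fv \<psi>. \<alpha> x = \<alpha> y \<longleftrightarrow> \<beta> x = \<beta> y) \<longrightarrow> (\<forall>x\<in>fv \<psi>. tp (\<alpha> x) = typ (\<beta> x)) \<longrightarrow>
   (sat Dn In \<alpha> \<psi> \<longleftrightarrow> sat D I \<beta> \<psi>))"

definition "TR \<chi> V = (\<forall>\<sigma> \<gamma>. (\<forall>x. \<sigma> x \<in> Dn) \<longrightarrow> (\<forall>x. \<gamma> x \<in> D) \<longrightarrow>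
   (\<forall>x\<in>fv \<chi>. \<forall>y\<in>fv \<chi>. \<sigma> x = \<sigma> y \<longleftrightarrow> \<gamma> x = \<gamma> y) \<longrightarrow> (\<forall>x\<in>fv \<chi>. tp (\<sigma> x) = typ (\<gamma> x)) \<longrightarrow>
   (\<forall>v\<in>V. fE (\<sigma> ` V) (\<sigma> v) = \<gamma> v) \<longrightarrow>
   (sat Dn In \<sigma> \<chi> \<longleftrightarrow> sat D I \<gamma> \<chi>))"

lemma typ_sat: "\<psi> \<in> Phi \<Longrightarrow> fv \<psi> \<subseteq> {x} \<Longrightarrow> sat D I \<beta> \<psi> \<longleftrightarrow> \<psi> \<in> typ (\<beta> x)"
proof -
  assume a: "\<psi> \<in> Phi" "fv \<psi> \<subseteq> {x}"
  have "sat D I \<beta> \<psi> = sat D I (\<lambda>_. \<beta> x) \<psi>" using a(2) by (intro sat_cong) auto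
  then show ?thesis using in_typ[OF a(1)] by simp
qed

lemma n0_bound: "X \<subseteq> Vs \<Longrightarrow> card X \<le> n0"
  unfolding n0_def using finite_Vs by (simp add: card_mono)

lemma block:
  assumes q: "(x0, ys, \<chi>, V) \<in> Q" and fvc: "fv \<chi> \<subseteq> insert x0 (set ys)" and Vc: "V \<subseteq> fv \<chi>"
    and tr: "TR \<chi> V"
  shows "agree (Exs ys \<chi>)"
  unfolding agree_def
proof (intro allI impI)
  fix \<alpha> \<beta>
  assume \<alpha>: "\<forall>x. \<alpha> x \<in> Dn" and \<beta>: "\<forall>x. \<beta> x \<in> D"
    and pat: "\<forall>x\<in>fv (Exs ys \<chi>). \<forall>y\<in>fv (Exs ys \<chi>). \<alpha> x = \<alpha> y \<longleftrightarrow> \<beta> x = \<beta> y"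
    and tps: "\<forall>x\<in>fv (Exs ys \<chi>). tp (\<alpha> x) = typ (\<beta> x)"
  let ?q = "(x0, ys, \<chi>, V)"
  let ?\<psi> = "Exs ys \<chi>"
  let ?X = "insert x0 (set ys)"
  have qD: "Exs ys \<chi> \<in> subs \<phi>" "x0 \<in> Vs" "x0 \<notin> set ys" "V \<in> atomsets" using Q_D[OF q] by simp_all
  have \<psi>Phi: "?\<psi> \<in> Phi" using Q_Phi[OF q] by simp
  have fv\<psi>: "fv ?\<psi> \<subseteq> {x0}" using fvc by auto
  have XVs: "?X \<subseteq> Vs" using qD(2) set_qys[OF q] by simp
  define c0 where "c0 = \<alpha> x0"
  have c0D: "c0 \<in> Dn" using \<alpha> c0_def by simp
  have rc0: "rho c0 \<in> D" "typ (rho c0) = tp c0" using rho[OF c0D] by auto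
  have Mside: "sat D I \<beta> ?\<psi> \<longleftrightarrow> ?\<psi> \<in> tp c0"
  proof (cases "x0 \<in> fv ?\<psi>")
    case True
    then have "tp c0 = typ (\<beta> x0)" using tps c0_def by simp
    then show ?thesis using typ_sat[OF \<psi>Phi fv\<psi>] by simp
  next
    case False
    then have "fv ?\<psi> \<subseteq> {}" using fv\<psi> by auto
    then have "sat D I \<beta> ?\<psi> = sat D I (\<lambda>_. rho c0) ?\<psi>" by (intro sat_cong) auto
    also have "\<dots> \<longleftrightarrow> ?\<psi> \<in> typ (rho c0)" using in_typ[OF \<psi>Phi] by simp
    finally show ?thesis using rc0 by simp
  qed
  have Nside: "sat Dn In \<alpha> ?\<psi> \<longleftrightarrow> ?\<psi> \<in> tp c0"
  proof
    assume "?\<psi> \<in> tp c0"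
    then have rq: "reqok c0 ?q" unfolding reqok_def using c0D q by simp
    let ?w = "wq c0 ?q"
    define \<sigma> where "\<sigma> = (\<lambda>v. if v \<in> set ys then cbar c0 ?q v else \<alpha> v)"
    have \<sigma>X: "\<forall>v\<in>?X. \<sigma> v = cbar c0 ?q v"
      unfolding \<sigma>_def c0_def using cbar_x0[of "\<alpha> x0" ?q] qD(3) by auto
    have \<sigma>D: "\<forall>x. \<sigma> x \<in> Dn" unfolding \<sigma>_def using \<alpha> cbar_in[OF rq] by simp
    have wD: "\<forall>x. ?w x \<in> D" using wq_D[OF rq] by blast
    have p1: "\<forall>x\<in>fv \<chi>. \<forall>y\<in>fv \<chi>. \<sigma> x = \<sigma> y \<longleftrightarrow> ?w x = ?w y"
      using \<sigma>X fvc cbar_eq[OF rq] by (metis subsetD)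
    have p2: "\<forall>x\<in>fv \<chi>. tp (\<sigma> x) = typ (?w x)"
      using \<sigma>X fvc cbar_tp[OF rq] by (metis subsetD)
    have VX: "V \<subseteq> ?X" using Vc fvc by blast
    have sV: "\<sigma> ` V = cbar c0 ?q ` V" using \<sigma>X VX by (intro image_cong) auto
    have p3: "\<forall>v\<in>V. fE (\<sigma> ` V) (\<sigma> v) = ?w v"
    proof
      fix v assume v: "v \<in> V"
      have "\<sigma> v = cbar c0 ?q v" using \<sigma>X VX v by blast
      then show "fE (\<sigma> ` V) (\<sigma> v) = ?w v" unfolding sV using fE_req[OF rq] v by simp
    qed
    have "sat Dn In \<sigma> \<chi> \<longleftrightarrow> sat D I ?w \<chi>" using tr \<sigma>D wD p1 p2 p3 unfolding TR_def by blast
    moreover have "sat D I ?w \<chi>" using wq_sat[OF rq] by simp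
    ultimately have s: "sat Dn In \<sigma> \<chi>" by simp
    have "\<forall>v. v \<notin> set ys \<longrightarrow> \<sigma> v = \<alpha> v" unfolding \<sigma>_def by simp
    moreover have "\<forall>v\<in>set ys. \<sigma> v \<in> Dn" using \<sigma>D by simp
    ultimately show "sat Dn In \<alpha> ?\<psi>" unfolding sat_Exs using s by blast
  next
    assume "sat Dn In \<alpha> ?\<psi>"
    then obtain \<sigma> where \<sigma>: "\<forall>v. v \<notin> set ys \<longrightarrow> \<sigma> v = \<alpha> v" "\<forall>v\<in>set ys. \<sigma> v \<in> Dn" "sat Dn In \<sigma> \<chi>"
      unfolding sat_Exs by blast
    have \<sigma>D: "\<forall>x. \<sigma> x \<in> Dn" using \<sigma>(1,2) \<alpha> by metis
    let ?S = "\<sigma> ` ?X"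
    have fS: "finite ?S" by simp
    have SD: "?S \<subseteq> Dn" using \<sigma>D by blast
    have cS: "card ?S \<le> n0" using n0_bound[OF XVs] card_image_le[of ?X \<sigma>] by simp
    have VX: "V \<subseteq> ?X" using Vc fvc by blast
    let ?E = "\<sigma> ` V"
    have ES: "?E \<subseteq> ?S" using VX by blast
    have fE': "finite ?E" using atomsets_finite[OF qD(4)] by simp
    have cE: "card ?E \<le> n0" using card_mono[OF fS ES] cS by simp
    have gE: "good (fE ?E) ?E" using fE_good[OF fE' _ cE] ES SD by blast
    obtain h where h: "good h ?S" "\<forall>c\<in>?E. h c = fE ?E c" using extend[OF fS SD cS ES gE] by blast
    define \<gamma> where "\<gamma> = (\<lambda>v. if v \<in> ?X then h (\<sigma> v) else h (\<sigma> x0))"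
    have hS: "\<forall>c\<in>?S. h c \<in> D \<and> typ (h c) = tp c" using h(1) unfolding good_def by blast
    have \<gamma>D: "\<forall>x. \<gamma> x \<in> D" unfolding \<gamma>_def using hS by simp
    have injh: "inj_on h ?S" using h(1) unfolding good_def by blast
    have p1: "\<forall>x\<in>fv \<chi>. \<forall>y\<in>fv \<chi>. \<sigma> x = \<sigma> y \<longleftrightarrow> \<gamma> x = \<gamma> y"
    proof (intro ballI)
      fix x y assume "x \<in> fv \<chi>" "y \<in> fv \<chi>"
      then have xy: "x \<in> ?X" "y \<in> ?X" using fvc by auto
      then have "\<gamma> x = h (\<sigma> x)" "\<gamma> y = h (\<sigma> y)" unfolding \<gamma>_def by auto
      moreover have "\<sigma> x \<in> ?S" "\<sigma> y \<in> ?S" using xy by auto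
      moreover have "h (\<sigma> x) = h (\<sigma> y) \<longleftrightarrow> \<sigma> x = \<sigma> y"
        by (rule inj_on_eq_iff[OF injh]) (use calculation in auto)
      ultimately show "\<sigma> x = \<sigma> y \<longleftrightarrow> \<gamma> x = \<gamma> y" by simp
    qed
    have p2: "\<forall>x\<in>fv \<chi>. tp (\<sigma> x) = typ (\<gamma> x)"
    proof
      fix x assume "x \<in> fv \<chi>"
      then have x: "x \<in> ?X" using fvc by auto
      then have "\<gamma> x = h (\<sigma> x)" unfolding \<gamma>_def by simp
      moreover have "\<sigma> x \<in> ?S" using x by blast
      then have "typ (h (\<sigma> x)) = tp (\<sigma> x)" using hS by blast
      ultimately show "tp (\<sigma> x) = typ (\<gamma> x)" by simp
    qed
    have p3: "\<forall>v\<in>V. fE ?E (\<sigma> v) = \<gamma> v"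
    proof
      fix v assume v: "v \<in> V"
      then have "\<gamma> v = h (\<sigma> v)" using VX unfolding \<gamma>_def by auto
      then show "fE ?E (\<sigma> v) = \<gamma> v" using h(2) v by simp
    qed
    have "sat Dn In \<sigma> \<chi> \<longleftrightarrow> sat D I \<gamma> \<chi>" using tr \<sigma>D \<gamma>D p1 p2 p3 unfolding TR_def by blast
    then have s: "sat D I \<gamma> \<chi>" using \<sigma>(3) by simp
    have "sat D I \<gamma> ?\<psi>" unfolding sat_Exs using s \<gamma>D by blast
    then have "?\<psi> \<in> typ (\<gamma> x0)" using typ_sat[OF \<psi>Phi fv\<psi>] by simp
    moreover have "\<gamma> x0 = h (\<sigma> x0)" unfolding \<gamma>_def by simp
    moreover have "\<sigma> x0 = c0" using \<sigma>(1) qD(3) c0_def by simp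
    moreover have "\<sigma> x0 \<in> ?S" by blast
    moreover have "typ (h c0) = tp c0" using hS calculation(4,3) by metis
    ultimately show "?\<psi> \<in> tp c0" by simp
  qed
  show "sat Dn In \<alpha> ?\<psi> \<longleftrightarrow> sat D I \<beta> ?\<psi>" using Mside Nside by simp
qed

lemma subs_Neg: "Neg a \<in> subs \<chi> \<Longrightarrow> a \<in> subs \<chi>"
  using subs_trans[of "Neg a" \<chi>] by auto

lemma subs_Conj: "Conj a b \<in> subs \<chi> \<Longrightarrow> a \<in> subs \<chi> \<and> b \<in> subs \<chi>"
  using subs_trans[of "Conj a b" \<chi>] by auto

lemma bc_transfer:
  assumes "bool_comb S \<chi>'" "\<chi>' \<in> subs \<chi>" "fv \<chi>' \<subseteq> fv \<chi>"
    "\<forall>\<theta>\<in>S. \<theta> \<in> subs \<chi> \<longrightarrow> fv \<theta> \<subseteq> fv \<chi> \<longrightarrow> (sat Dn In \<sigma> \<theta> \<longleftrightarrow> sat D I \<gamma> \<theta>)"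
  shows "sat Dn In \<sigma> \<chi>' \<longleftrightarrow> sat D I \<gamma> \<chi>'"
  using assms(1-3)
proof (induction rule: bool_comb.induct)
  case (bc_base \<phi>') then show ?case using assms(4) by blast
next
  case (bc_neg \<phi>')
  have "\<phi>' \<in> subs \<chi>" using subs_Neg bc_neg.prems(1) by blast
  then show ?case using bc_neg.IH bc_neg.prems(2) by simp
next
  case (bc_conj \<phi>1 \<phi>2)
  have "\<phi>1 \<in> subs \<chi>" "\<phi>2 \<in> subs \<chi>" using subs_Conj bc_conj.prems(1) by blast+
  then show ?case using bc_conj.IH bc_conj.prems(2) by simp
qed

lemma bc_fv: "bool_comb S \<chi> \<Longrightarrow> fv \<chi> \<subseteq> \<Union> (fv ` S)"
  by (induction rule: bool_comb.induct) auto

lemma TR_of: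
  assumes U: "\<forall>\<theta>\<in>U. \<theta> \<in> subs \<phi> \<longrightarrow> agree \<theta>" and bc: "bool_comb (U \<union> F) \<chi>" and \<chi>s: "\<chi> \<in> subs \<phi>"
    and F: "\<forall>\<theta>\<in>F. rel_atom ar \<theta> \<and> fv \<theta> = V"
    and V': "V' = (if \<exists>\<theta>\<in>F. \<theta> \<in> subs \<chi> \<and> fv \<theta> \<subseteq> fv \<chi> then V else {})"
  shows "TR \<chi> V'"
  unfolding TR_def
proof (intro allI impI)
  fix \<sigma> \<gamma>
  assume \<sigma>: "\<forall>x. \<sigma> x \<in> Dn" and \<gamma>: "\<forall>x. \<gamma> x \<in> D"
    and pat: "\<forall>x\<in>fv \<chi>. \<forall>y\<in>fv \<chi>. \<sigma> x = \<sigma> y \<longleftrightarrow> \<gamma> x = \<gamma> y"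
    and tps: "\<forall>x\<in>fv \<chi>. tp (\<sigma> x) = typ (\<gamma> x)"
    and dat: "\<forall>v\<in>V'. fE (\<sigma> ` V') (\<sigma> v) = \<gamma> v"
  have base: "\<forall>\<theta>\<in>U \<union> F. \<theta> \<in> subs \<chi> \<longrightarrow> fv \<theta> \<subseteq> fv \<chi> \<longrightarrow> (sat Dn In \<sigma> \<theta> \<longleftrightarrow> sat D I \<gamma> \<theta>)"
  proof (intro ballI impI)
    fix \<theta> assume \<theta>: "\<theta> \<in> U \<union> F" "\<theta> \<in> subs \<chi>" "fv \<theta> \<subseteq> fv \<chi>"
    show "sat Dn In \<sigma> \<theta> \<longleftrightarrow> sat D I \<gamma> \<theta>"
    proof (cases "\<theta> \<in> U")
      case True
      have "\<theta> \<in> subs \<phi>" using \<theta>(2) \<chi>s subs_trans by blast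
      then have ag: "agree \<theta>" using U True by blast
      have p1: "\<forall>x\<in>fv \<theta>. \<forall>y\<in>fv \<theta>. \<sigma> x = \<sigma> y \<longleftrightarrow> \<gamma> x = \<gamma> y" using pat \<theta>(3) by blast
      have p2: "\<forall>x\<in>fv \<theta>. tp (\<sigma> x) = typ (\<gamma> x)" using tps \<theta>(3) by blast
      show ?thesis using ag \<sigma> \<gamma> p1 p2 unfolding agree_def by blast
    next
      case False
      then have \<theta>F: "\<theta> \<in> F" using \<theta>(1) by blast
      then obtain R zs where R: "\<theta> = Rel R zs" "fv \<theta> = V" using F unfolding rel_atom_def by blast
      have VV: "V' = V" using V' \<theta>F \<theta>(2,3) by auto
      have sz: "set zs = V" using R by simp
      have eqm: "map (fE (set (map \<sigma> zs))) (map \<sigma> zs) = map \<gamma> zs"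
      proof -
        have "set (map \<sigma> zs) = \<sigma> ` V'" using sz VV by simp
        then have "map (fE (set (map \<sigma> zs))) (map \<sigma> zs) = map (\<lambda>v. fE (\<sigma> ` V') (\<sigma> v)) zs" by simp
        also have "\<dots> = map \<gamma> zs" using dat sz VV by (intro map_cong) auto
        finally show ?thesis .
      qed
      show ?thesis unfolding R(1) sat.simps In_def eqm ..
    qed
  qed
  have fvs: "fv \<chi> \<subseteq> fv \<chi>" by simp
  show "sat Dn In \<sigma> \<chi> \<longleftrightarrow> sat D I \<gamma> \<chi>" using bc_transfer[OF bc subs_self fvs base] .
qed

lemma exblock:
  assumes \<psi>s: "Exs ys \<chi> \<in> subs \<phi>" and fvc: "fv \<chi> \<subseteq> insert x (set ys)" and xn: "x \<notin> set ys"
    and U: "\<forall>\<theta>\<in>U. \<theta> \<in> subs \<phi> \<longrightarrow> agree \<theta>" and bc: "bool_comb (U \<union> F) \<chi>"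
    and F: "\<forall>\<theta>\<in>F. rel_atom ar \<theta> \<and> fv \<theta> = V"
  shows "agree (Exs ys \<chi>)"
proof -
  have \<chi>s: "\<chi> \<in> subs \<phi>" and ysv: "set ys \<subseteq> vars \<phi>" using subs_Exs[OF \<psi>s] by auto
  define x0 where "x0 = (if x \<in> vars \<phi> then x else z0)"
  define V' where "V' = (if \<exists>\<theta>\<in>F. \<theta> \<in> subs \<chi> \<and> fv \<theta> \<subseteq> fv \<chi> then V else {})"
  have x0V: "x0 \<in> Vs" unfolding x0_def Vs_def by simp
  have x0n: "x0 \<notin> set ys" unfolding x0_def using xn ysv z0_notin by auto
  have fvcv: "fv \<chi> \<subseteq> vars \<phi>" using fv_vars subs_vars[OF \<chi>s] by blast
  have fvc': "fv \<chi> \<subseteq> insert x0 (set ys)" unfolding x0_def using fvc fvcv by auto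
  have V'at: "V' \<in> atomsets \<and> V' \<subseteq> fv \<chi>"
  proof (cases "\<exists>\<theta>\<in>F. \<theta> \<in> subs \<chi> \<and> fv \<theta> \<subseteq> fv \<chi>")
    case True
    then obtain \<theta> where \<theta>: "\<theta> \<in> F" "\<theta> \<in> subs \<chi>" "fv \<theta> \<subseteq> fv \<chi>" by blast
    then obtain R zs where R: "\<theta> = Rel R zs" "fv \<theta> = V" using F unfolding rel_atom_def by blast
    have "Rel R zs \<in> subs \<phi>" using \<theta>(2) \<chi>s subs_trans R(1) by blast
    then have "V \<in> atomsets" unfolding atomsets_def using R by auto
    then show ?thesis unfolding V'_def using True \<theta> R by auto
  next
    case False
    then have "V' = {}" unfolding V'_def by (rule if_not_P)
    then show ?thesis unfolding atomsets_def by simp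
  qed
  have q: "(x0, ys, \<chi>, V') \<in> Q" unfolding Q_def using \<psi>s x0V x0n V'at by simp
  have tr: "TR \<chi> V'" using TR_of[OF U bc \<chi>s F V'_def] .
  show ?thesis using block[OF q fvc' _ tr] V'at by blast
qed

lemma main: "uf1 ar \<psi> \<Longrightarrow> \<psi> \<in> subs \<phi> \<Longrightarrow> agree \<psi>"
proof (induction rule: uf1.induct)
  case (uf_unary_rel \<psi>)
  then obtain R zs where R: "\<psi> = Rel R zs" unfolding rel_atom_def by blast
  then obtain x where x: "set zs = {x}" using uf_unary_rel(2) by (auto simp: card_Suc_eq)
  have Phi: "\<psi> \<in> Phi" using uf_unary_rel(3) unfolding Phi_def by simp
  show ?case unfolding agree_def
  proof (intro allI impI)
    fix \<alpha> \<beta>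
    assume \<alpha>: "\<forall>x. \<alpha> x \<in> Dn" and \<beta>: "\<forall>x. \<beta> x \<in> D"
      and tps: "\<forall>y\<in>fv \<psi>. tp (\<alpha> y) = typ (\<beta> y)"
    have fvx: "fv \<psi> = {x}" using R x by simp
    have sm: "set (map \<alpha> zs) = {\<alpha> x}" using x by simp
    have "sat Dn In \<alpha> \<psi> = I R (map rho (map \<alpha> zs))"
      unfolding R using fE_single[of "\<alpha> x"] \<alpha> sm by (simp add: In_def)
    also have "\<dots> = I R (map (\<lambda>_. rho (\<alpha> x)) zs)" using x by (intro arg_cong[of _ _ "I R"]) (auto intro!: map_cong)
    also have "\<dots> = sat D I (\<lambda>_. rho (\<alpha> x)) \<psi>" unfolding R by simp
    also have "\<dots> \<longleftrightarrow> \<psi> \<in> typ (rho (\<alpha> x))" using in_typ[OF Phi] by simp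
    also have "typ (rho (\<alpha> x)) = typ (\<beta> x)" using rho \<alpha> tps fvx by simp
    also have "\<psi> \<in> typ (\<beta> x) \<longleftrightarrow> sat D I \<beta> \<psi>" using typ_sat[OF Phi] fvx by simp
    finally show "sat Dn In \<alpha> \<psi> \<longleftrightarrow> sat D I \<beta> \<psi>" .
  qed
next
  case uf_bot then show ?case unfolding agree_def by simp
next
  case uf_top then show ?case unfolding agree_def by simp
next
  case (uf_eq x y) then show ?case unfolding agree_def by simp
next
  case (uf_neg \<psi>)
  have "\<psi> \<in> subs \<phi>" using subs_Neg uf_neg.prems by blast
  then have "agree \<psi>" using uf_neg.IH by blast
  then show ?case unfolding agree_def by simp
next
  case (uf_conj \<psi>1 \<psi>2)
  then have a: "agree \<psi>1" "agree \<psi>2" using subs_Conj by blast+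
  show ?case unfolding agree_def
  proof (intro allI impI)
    fix \<alpha> \<beta>
    assume h: "\<forall>x. \<alpha> x \<in> Dn" "\<forall>x. \<beta> x \<in> D"
      "\<forall>x\<in>fv (Conj \<psi>1 \<psi>2). \<forall>y\<in>fv (Conj \<psi>1 \<psi>2). \<alpha> x = \<alpha> y \<longleftrightarrow> \<beta> x = \<beta> y"
      "\<forall>x\<in>fv (Conj \<psi>1 \<psi>2). tp (\<alpha> x) = typ (\<beta> x)"
    have "sat Dn In \<alpha> \<psi>1 \<longleftrightarrow> sat D I \<beta> \<psi>1" using a(1) h unfolding agree_def by simp
    moreover have "sat Dn In \<alpha> \<psi>2 \<longleftrightarrow> sat D I \<beta> \<psi>2" using a(2) h unfolding agree_def by simp
    ultimately show "sat Dn In \<alpha> (Conj \<psi>1 \<psi>2) \<longleftrightarrow> sat D I \<beta> (Conj \<psi>1 \<psi>2)" by simp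
  qed
next
  case (uf_ex xs U V F \<chi>)
  have U: "\<forall>\<theta>\<in>U. \<theta> \<in> subs \<phi> \<longrightarrow> agree \<theta>" using uf_ex.IH by blast
  have F: "\<forall>\<theta>\<in>F. rel_atom ar \<theta> \<and> fv \<theta> = V" using \<open>uniform_set ar V F\<close> unfolding uniform_set_def by blast
  have "\<Union> (fv ` (U \<union> F)) \<subseteq> set xs" using uf_ex.IH \<open>V \<subseteq> set xs\<close> F by auto
  then have fvc: "fv \<chi> \<subseteq> set xs" using bc_fv[OF \<open>bool_comb (U \<union> F) \<chi>\<close>] by blast
  obtain x ys where xs: "xs = x # ys" using \<open>xs \<noteq> []\<close> by (cases xs) auto
  have xn: "x \<notin> set ys" using \<open>distinct xs\<close> xs by simp
  have fvc': "fv \<chi> \<subseteq> insert x (set ys)" using fvc xs by simp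
  have "Exs ys \<chi> \<in> subs \<phi>" using uf_ex.prems xs by simp
  then show ?case using exblock[OF _ fvc' xn U \<open>bool_comb (U \<union> F) \<chi>\<close> F] xs by simp
next
  case (uf_ex_all xs U V F \<chi>)
  have U: "\<forall>\<theta>\<in>U. \<theta> \<in> subs \<phi> \<longrightarrow> agree \<theta>" using uf_ex_all.IH by blast
  have F: "\<forall>\<theta>\<in>F. rel_atom ar \<theta> \<and> fv \<theta> = V" using \<open>uniform_set ar V F\<close> unfolding uniform_set_def by blast
  have "\<Union> (fv ` (U \<union> F)) \<subseteq> set xs" using uf_ex_all.IH \<open>V \<subseteq> set xs\<close> F by auto
  then have fvc: "fv \<chi> \<subseteq> set xs" using bc_fv[OF \<open>bool_comb (U \<union> F) \<chi>\<close>] by blast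
  have xs: "set xs \<subseteq> vars \<phi>" using subs_Exs[OF uf_ex_all.prems] by blast
  have xn: "z0 \<notin> set xs" using xs z0_notin by blast
  have fvc': "fv \<chi> \<subseteq> insert z0 (set xs)" using fvc by blast
  show ?case using exblock[OF uf_ex_all.prems fvc' xn U \<open>bool_comb (U \<union> F) \<chi>\<close> F] .
qed

end


lemma card_Un4: "card (A \<union> B \<union> C \<union> E) \<le> card A + card B + card C + card E"
  using card_Un_le[of "A\<union>B\<union>C" E] card_Un_le[of "A\<union>B" C] card_Un_le[of A B] by linarith

context fmp begin

definition "AA = fsize \<phi> + 1"

lemma AA_ge1[simp]: "1 \<le> AA" unfolding AA_def by simp
lemma AA_pos[simp]: "0 < AA" unfolding AA_def by simp
lemma AA_ge1'[simp]: "Suc 0 \<le> AA" unfolding AA_def by simp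

lemma card_Vs: "card Vs \<le> AA"
proof -
  have "card Vs \<le> Suc (card (vars \<phi>))" unfolding Vs_def by (simp add: card_insert_if)
  then show ?thesis using card_vars[of \<phi>] unfolding AA_def by simp
qed

lemma card_atomsets: "card atomsets \<le> AA"
proof -
  let ?f = "\<lambda>f. case f of Rel R zs \<Rightarrow> set zs | _ \<Rightarrow> {}"
  have sub: "{set zs | R zs. Rel R zs \<in> subs \<phi>} \<subseteq> ?f ` subs \<phi>"
  proof
    fix A assume "A \<in> {set zs | R zs. Rel R zs \<in> subs \<phi>}"
    then obtain R zs where "A = set zs" "Rel R zs \<in> subs \<phi>" by blast
    then show "A \<in> ?f ` subs \<phi>" by (intro image_eqI[of _ _ "Rel R zs"]) auto
  qed
  have "card {set zs | R zs. Rel R zs \<in> subs \<phi>} \<le> card (?f ` subs \<phi>)"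
    by (rule card_mono[OF _ sub]) simp
  also have "\<dots> \<le> card (subs \<phi>)" by (rule card_image_le) simp
  also have "\<dots> \<le> fsize \<phi>" by (rule card_subs)
  finally have "card {set zs | R zs. Rel R zs \<in> subs \<phi>} \<le> fsize \<phi>" .
  moreover have "card atomsets \<le> Suc (card {set zs | R zs. Rel R zs \<in> subs \<phi>})"
    unfolding atomsets_def using finite_Phi_aux by (simp add: card_insert_if)
  ultimately show ?thesis unfolding AA_def by simp
qed

lemma card_Q: "card Q \<le> AA ^ 4"
proof -
  have "card Q \<le> card ((\<lambda>(x, \<psi>, \<chi>, V). (x, THE ys. Exs ys \<chi> = \<psi>, \<chi>, V)) ` (Vs \<times> subs \<phi> \<times> subs \<phi> \<times> atomsets))"
    by (rule card_mono[OF _ Q_sub]) (simp add: finite_Vs finite_atomsets)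
  also have "\<dots> \<le> card (Vs \<times> subs \<phi> \<times> subs \<phi> \<times> atomsets)"
    by (rule card_image_le) (simp add: finite_Vs finite_atomsets)
  also have "\<dots> = card Vs * card (subs \<phi>) * card (subs \<phi>) * card atomsets"
    by (simp add: card_cartesian_product)
  also have "\<dots> \<le> AA * AA * AA * AA"
    using card_Vs card_subs[of \<phi>] card_atomsets unfolding AA_def
    by (intro mult_le_mono) auto
  finally show ?thesis by (simp add: power4_eq_xxxx mult.assoc)
qed

lemma card_Phi: "card Phi \<le> 2 * AA ^ 4"
proof -
  have "card Phi \<le> card (subs \<phi>) + card (outf ` Q)" unfolding Phi_def by (rule card_Un_le)
  also have "card (outf ` Q) \<le> card Q" by (rule card_image_le[OF finite_Q])
  finally have "card Phi \<le> card (subs \<phi>) + card Q" by simp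
  moreover have "card (subs \<phi>) \<le> AA ^ 4"
  proof -
    have "card (subs \<phi>) \<le> AA" using card_subs[of \<phi>] unfolding AA_def by simp
    also have "AA \<le> AA ^ 4" by (rule self_le_power) auto
    finally show ?thesis .
  qed
  ultimately show ?thesis using card_Q by simp
qed

lemma card_Ty: "card Ty \<le> 2 ^ (2 * AA ^ 4)"
proof -
  have "Ty \<subseteq> Pow Phi" unfolding Ty_def using typ_sub by auto
  then have "card Ty \<le> card (Pow Phi)" by (rule card_mono[rotated]) (simp add: finite_Phi)
  also have "\<dots> = 2 ^ card Phi" by (rule card_Pow[OF finite_Phi])
  also have "\<dots> \<le> 2 ^ (2 * AA ^ 4)" by (rule power_increasing[OF card_Phi]) simp
  finally show ?thesis .
qed

lemma Ty_pos: "card Ty \<ge> 1"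
proof -
  obtain b where "b \<in> D" using Dne by blast
  then have "Ty \<noteq> {}" unfolding Ty_def by blast
  then show ?thesis using finite_Ty by (simp add: Suc_leI card_gt_0_iff)
qed

lemma RareEl_UN: "RareEl = (\<Union>\<tau>\<in>{\<tau>\<in>Ty. rare \<tau>}. cnt \<tau>)"
  unfolding RareEl_def cnt_def Ty_def by auto

lemma finite_RareEl: "finite RareEl"
  unfolding RareEl_UN using finite_Ty rare_def by auto

lemma card_RareEl: "card RareEl \<le> card Ty * AA"
proof -
  have "card RareEl \<le> (\<Sum>\<tau>\<in>{\<tau>\<in>Ty. rare \<tau>}. card (cnt \<tau>))"
    unfolding RareEl_UN by (rule card_UN_le) (simp add: finite_Ty)
  also have "\<dots> \<le> (\<Sum>\<tau>\<in>{\<tau>\<in>Ty. rare \<tau>}. AA)"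
  proof (rule sum_mono)
    fix \<tau> assume "\<tau> \<in> {\<tau>\<in>Ty. rare \<tau>}"
    then have "card (cnt \<tau>) < n0" unfolding rare_def by simp
    then show "card (cnt \<tau>) \<le> AA" using card_Vs unfolding n0_def by simp
  qed
  also have "\<dots> = card {\<tau>\<in>Ty. rare \<tau>} * AA" by simp
  also have "\<dots> \<le> card Ty * AA" by (intro mult_le_mono1 card_mono) (simp_all add: finite_Ty)
  finally show ?thesis .
qed

lemma card_IdxS: "card IdxS \<le> 4 * card Ty * AA ^ 6"
proof -
  let ?T = "card Ty"
  have fin: "finite Q" "finite Vs" "finite Ty" "finite RareEl" using finite_Q finite_Vs finite_Ty finite_RareEl by auto
  have A1: "AA \<ge> 1" by simp
  have c1: "card ((\<lambda>(q,v). IIn q v) ` (Q \<times> Vs) :: 'a idx set) \<le> AA ^ 5"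
  proof -
    have "card ((\<lambda>(q,v). IIn q v) ` (Q \<times> Vs) :: 'a idx set) \<le> card (Q \<times> Vs)" by (rule card_image_le) (simp add: fin)
    also have "\<dots> = card Q * card Vs" by (rule card_cartesian_product)
    also have "\<dots> \<le> AA ^ 4 * AA" using card_Q card_Vs by (rule mult_le_mono)
    finally show ?thesis by (simp add: eval_nat_numeral mult_ac)
  qed
  have c2: "card ((\<lambda>(\<tau>,q,v). IOut \<tau> q v) ` (Ty \<times> Q \<times> Vs) :: 'a idx set) \<le> ?T * AA ^ 5"
  proof -
    have "card ((\<lambda>(\<tau>,q,v). IOut \<tau> q v) ` (Ty \<times> Q \<times> Vs) :: 'a idx set) \<le> card (Ty \<times> Q \<times> Vs)" by (rule card_image_le) (simp add: fin)
    also have "\<dots> = ?T * (card Q * card Vs)" by (simp add: card_cartesian_product)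
    also have "\<dots> \<le> ?T * (AA ^ 4 * AA)" using card_Q card_Vs by (intro mult_le_mono) auto
    finally show ?thesis by (simp add: eval_nat_numeral mult_ac)
  qed
  have c3: "card ((\<lambda>(a,q,v). IRare a q v) ` (RareEl \<times> Q \<times> Vs)) \<le> ?T * AA ^ 6"
  proof -
    have "card ((\<lambda>(a,q,v). IRare a q v) ` (RareEl \<times> Q \<times> Vs)) \<le> card (RareEl \<times> Q \<times> Vs)" by (rule card_image_le) (simp add: fin)
    also have "\<dots> = card RareEl * (card Q * card Vs)" by (simp add: card_cartesian_product)
    also have "\<dots> \<le> (?T * AA) * (AA ^ 4 * AA)" using card_Q card_Vs card_RareEl by (intro mult_le_mono) auto
    finally show ?thesis by (simp add: eval_nat_numeral mult_ac)
  qed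
  have c4: "card (IPlain ` Vs :: 'a idx set) \<le> AA" using card_image_le[OF fin(2), of IPlain] card_Vs by (rule order_trans)
  have "card IdxS \<le> card ((\<lambda>(q,v). IIn q v) ` (Q \<times> Vs) :: 'a idx set) + card ((\<lambda>(\<tau>,q,v). IOut \<tau> q v) ` (Ty \<times> Q \<times> Vs) :: 'a idx set)
      + card ((\<lambda>(a,q,v). IRare a q v) ` (RareEl \<times> Q \<times> Vs)) + card (IPlain ` Vs :: 'a idx set)"
    unfolding IdxS_def by (rule card_Un4)
  also have "\<dots> \<le> AA ^ 5 + ?T * AA ^ 5 + ?T * AA ^ 6 + AA" using c1 c2 c3 c4 by simp
  also have "\<dots> \<le> ?T * AA ^ 6 + ?T * AA ^ 6 + ?T * AA ^ 6 + ?T * AA ^ 6"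
  proof -
    have T1: "?T \<ge> 1" by (rule Ty_pos)
    have a56: "AA ^ 5 \<le> AA ^ 6" by (rule power_increasing) auto
    have a16: "AA \<le> AA ^ 6" by (rule self_le_power) auto
    have t: "\<And>x. x \<le> ?T * x" using T1 by simp
    have "AA ^ 5 \<le> ?T * AA ^ 6" using a56 t order_trans by blast
    moreover have "?T * AA ^ 5 \<le> ?T * AA ^ 6" by (rule mult_le_mono2[OF a56])
    moreover have "AA \<le> ?T * AA ^ 6" using a16 t order_trans by blast
    ultimately show ?thesis by linarith
  qed
  finally show ?thesis by simp
qed

lemma Dn_sub: "Dn \<subseteq> Inl ` RareEl \<union> Inr ` (Ty \<times> {..<3} \<times> IdxS)"
  unfolding Dn_def by auto

lemma finite_IdxS: "finite IdxS"
  unfolding IdxS_def using finite_Q finite_Vs finite_Ty finite_RareEl by simp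

lemma finite_Dn: "finite Dn"
  using Dn_sub finite_subset finite_RareEl finite_Ty finite_IdxS by (meson finite_SigmaI finite_Un finite_imageI finite_lessThan)

lemma card_Dn: "card Dn \<le> 2 ^ (14 * AA ^ 4)"
proof -
  let ?T = "card Ty"
  have fin: "finite (Inl ` RareEl \<union> Inr ` (Ty \<times> {..<3} \<times> IdxS) :: 'a el set)"
    using finite_RareEl finite_Ty finite_IdxS by simp
  have "card Dn \<le> card (Inl ` RareEl \<union> Inr ` (Ty \<times> {..<3} \<times> IdxS) :: 'a el set)"
    by (rule card_mono[OF fin Dn_sub])
  also have "\<dots> \<le> card (Inl ` RareEl :: 'a el set) + card (Inr ` (Ty \<times> {..<3} \<times> IdxS) :: 'a el set)"
    by (rule card_Un_le)
  also have "\<dots> \<le> card RareEl + card (Ty \<times> {..<3::nat} \<times> IdxS)"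
    by (intro add_mono card_image_le) (simp_all add: finite_RareEl finite_Ty finite_IdxS)
  also have "card (Ty \<times> {..<3::nat} \<times> IdxS) = ?T * (3 * card IdxS)" by (simp add: card_cartesian_product)
  also have "card RareEl + ?T * (3 * card IdxS) \<le> ?T * AA + ?T * (3 * (4 * ?T * AA ^ 6))"
    using card_RareEl card_IdxS by (intro add_mono mult_le_mono) auto
  also have "\<dots> \<le> 16 * (?T * ?T) * AA ^ 6"
  proof -
    have T1: "?T \<ge> 1" by (rule Ty_pos)
    have "?T * AA \<le> ?T * ?T * AA ^ 6"
    proof -
      have "AA \<le> AA ^ 6" by (rule self_le_power) auto
      moreover have "?T \<le> ?T * ?T" using T1 by simp
      ultimately show ?thesis by (intro mult_le_mono) auto
    qed
    moreover have "?T * (3 * (4 * ?T * AA ^ 6)) = 12 * (?T * ?T * AA ^ 6)" by (simp add: algebra_simps)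
    moreover have "16 * (?T * ?T) * AA ^ 6 = 16 * (?T * ?T * AA ^ 6)" by (simp add: algebra_simps)
    ultimately show ?thesis by linarith
  qed
  also have "\<dots> \<le> 2 ^ 4 * (2 ^ (2 * AA ^ 4) * 2 ^ (2 * AA ^ 4)) * (2 ^ AA) ^ 6"
  proof -
    have h1: "AA ^ 6 \<le> (2 ^ AA) ^ 6" by (rule power_mono) (simp_all add: less_imp_le less_exp)
    have h2: "?T * ?T \<le> 2 ^ (2 * AA ^ 4) * 2 ^ (2 * AA ^ 4)" using card_Ty card_Ty by (rule mult_le_mono)
    show ?thesis by (rule mult_le_mono[OF mult_le_mono[OF _ h2] h1]) simp
  qed
  also have "\<dots> = 2 ^ 4 * 2 ^ (4 * AA ^ 4) * 2 ^ (6 * AA)"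
  proof -
    have e1: "(2::nat) ^ (2 * AA ^ 4) * 2 ^ (2 * AA ^ 4) = 2 ^ (4 * AA ^ 4)"
      by (subst power_add[symmetric]) simp
    have e2: "((2::nat) ^ AA) ^ 6 = 2 ^ (6 * AA)"
      by (simp add: power_mult[symmetric] mult.commute)
    show ?thesis using e1 e2 by simp
  qed
  also have "\<dots> = 2 ^ (4 + 4 * AA ^ 4 + 6 * AA)" by (simp add: power_add)
  also have "\<dots> \<le> 2 ^ (14 * AA ^ 4)"
  proof (rule power_increasing)
    have "1 \<le> AA ^ 4" by simp
    moreover have "AA \<le> AA ^ 4" by (rule self_le_power) auto
    ultimately show "4 + 4 * AA ^ 4 + 6 * AA \<le> 14 * AA ^ 4" by linarith
  qed simp
  finally show ?thesis .
qed

end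


lemma sat_iso:
  assumes g: "bij_betw g D2 D1"
  shows "(\<forall>x. \<sigma> x \<in> D2) \<Longrightarrow> sat D2 (\<lambda>R ns. I1 R (map g ns)) \<sigma> \<psi> = sat D1 I1 (g \<circ> \<sigma>) \<psi>"
proof (induction \<psi> arbitrary: \<sigma>)
  case (Eq x y)
  have inj: "inj_on g D2" using g bij_betw_imp_inj_on by blast
  show ?case using inj_on_eq_iff[OF inj] Eq.prems by simp
next
  case (Ex x \<psi>)
  have im: "g ` D2 = D1" using g bij_betw_imp_surj_on by blast
  have upd: "\<And>d. g \<circ> \<sigma>(x := d) = (g \<circ> \<sigma>)(x := g d)" by (simp add: fun_eq_iff)
  have "sat D2 (\<lambda>R ns. I1 R (map g ns)) \<sigma> (fm.Ex x \<psi>) \<longleftrightarrow> (\<exists>d\<in>D2. sat D1 I1 ((g \<circ> \<sigma>)(x := g d)) \<psi>)"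
  proof -
    have "\<And>d. d \<in> D2 \<Longrightarrow> sat D2 (\<lambda>R ns. I1 R (map g ns)) (\<sigma>(x := d)) \<psi> = sat D1 I1 ((g \<circ> \<sigma>)(x := g d)) \<psi>"
    proof -
      fix d assume d: "d \<in> D2"
      have "\<forall>y. (\<sigma>(x := d)) y \<in> D2" using Ex.prems d by simp
      then have "sat D2 (\<lambda>R ns. I1 R (map g ns)) (\<sigma>(x := d)) \<psi> = sat D1 I1 (g \<circ> \<sigma>(x := d)) \<psi>" by (rule Ex.IH)
      then show "sat D2 (\<lambda>R ns. I1 R (map g ns)) (\<sigma>(x := d)) \<psi> = sat D1 I1 ((g \<circ> \<sigma>)(x := g d)) \<psi>"
        unfolding upd .
    qed
    then show ?thesis by simp
  qed
  also have "\<dots> \<longleftrightarrow> (\<exists>e\<in>D1. sat D1 I1 ((g \<circ> \<sigma>)(x := e)) \<psi>)" using im by blast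
  finally show ?case by (simp add: comp_def)
qed (simp_all add: comp_def)

context fmp begin

lemma fmp_main:
  assumes uf: "uf1 ar \<phi>" and \<sigma>: "\<forall>x. \<sigma> x \<in> D" and s: "sat D I \<sigma> \<phi>"
  shows "\<exists>\<alpha>. (\<forall>x. \<alpha> x \<in> Dn) \<and> sat Dn In \<alpha> \<phi>"
proof -
  obtain b0 where b0: "b0 \<in> D" using Dne by blast
  have z0V: "z0 \<in> Vs" unfolding Vs_def by simp
  define e0 :: "'a el" where "e0 = (if rare (typ b0) then Inl b0 else Inr (typ b0, 0, IPlain z0))"
  have e0D: "e0 \<in> Dn"
  proof (cases "rare (typ b0)")
    case True then show ?thesis unfolding e0_def using Dn_I2 b0 unfolding RareEl_def by simp
  next
    case False
    have "typ b0 \<in> Ty" using b0 unfolding Ty_def by simp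
    then show ?thesis unfolding e0_def using False Dn_I1 IdxS_I(4)[OF z0V] by simp
  qed
  define cn where "cn x = (LEAST u. u \<in> fv \<phi> \<and> \<sigma> u = \<sigma> x)" for x
  have cn: "x \<in> fv \<phi> \<Longrightarrow> cn x \<in> fv \<phi> \<and> \<sigma> (cn x) = \<sigma> x" for x
    unfolding cn_def by (rule LeastI[of "\<lambda>u. u \<in> fv \<phi> \<and> \<sigma> u = \<sigma> x" x]) simp
  define \<alpha> :: "nat \<Rightarrow> 'a el" where "\<alpha> x = (if x \<in> fv \<phi> then (if rare (typ (\<sigma> x)) then Inl (\<sigma> x)
     else Inr (typ (\<sigma> x), 0, IPlain (cn x))) else e0)" for x
  have \<alpha>D: "\<forall>x. \<alpha> x \<in> Dn"
  proof
    fix x show "\<alpha> x \<in> Dn"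
    proof (cases "x \<in> fv \<phi>")
      case True
      show ?thesis
      proof (cases "rare (typ (\<sigma> x))")
        case r: True then show ?thesis unfolding \<alpha>_def using True Dn_I2 \<sigma> unfolding RareEl_def by simp
      next
        case r: False
        have "typ (\<sigma> x) \<in> Ty" using \<sigma> unfolding Ty_def by simp
        moreover have "cn x \<in> Vs" using cn[OF True] fv_vars unfolding Vs_def by blast
        ultimately show ?thesis unfolding \<alpha>_def using True r Dn_I1 IdxS_I(4) by simp
      qed
    next
      case False then show ?thesis unfolding \<alpha>_def using e0D by simp
    qed
  qed
  have pat: "\<forall>x\<in>fv \<phi>. \<forall>y\<in>fv \<phi>. \<alpha> x = \<alpha> y \<longleftrightarrow> \<sigma> x = \<sigma> y"
  proof (intro ballI)
    fix x y assume x: "x \<in> fv \<phi>" and y: "y \<in> fv \<phi>"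
    show "\<alpha> x = \<alpha> y \<longleftrightarrow> \<sigma> x = \<sigma> y"
    proof
      assume "\<sigma> x = \<sigma> y"
      then have "cn x = cn y" unfolding cn_def by simp
      then show "\<alpha> x = \<alpha> y" unfolding \<alpha>_def using x y \<open>\<sigma> x = \<sigma> y\<close> by simp
    next
      assume e: "\<alpha> x = \<alpha> y"
      show "\<sigma> x = \<sigma> y"
      proof (cases "rare (typ (\<sigma> x))"; cases "rare (typ (\<sigma> y))")
        assume "rare (typ (\<sigma> x))" "rare (typ (\<sigma> y))" then show ?thesis using e x y unfolding \<alpha>_def by simp
      next
        assume "rare (typ (\<sigma> x))" "\<not> rare (typ (\<sigma> y))" then show ?thesis using e x y unfolding \<alpha>_def by simp
      next
        assume "\<not> rare (typ (\<sigma> x))" "rare (typ (\<sigma> y))" then show ?thesis using e x y unfolding \<alpha>_def by simp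
      next
        assume "\<not> rare (typ (\<sigma> x))" "\<not> rare (typ (\<sigma> y))"
        then have "cn x = cn y" using e x y unfolding \<alpha>_def by simp
        then show ?thesis using cn[OF x] cn[OF y] by metis
      qed
    qed
  qed
  have tps: "\<forall>x\<in>fv \<phi>. tp (\<alpha> x) = typ (\<sigma> x)"
    unfolding \<alpha>_def tp_def by simp
  have "agree \<phi>" using main[OF uf] by simp
  then have "sat Dn In \<alpha> \<phi> \<longleftrightarrow> sat D I \<sigma> \<phi>" using \<alpha>D \<sigma> pat tps unfolding agree_def by metis
  then show ?thesis using s \<alpha>D by blast
qed

end

lemma fmp_nat:
  fixes D :: "'a set"
  assumes uf: "uf1 ar \<phi>" and m: "is_model D I \<sigma> \<phi>"
  shows "\<exists>(D2::nat set) I2 \<sigma>2. finite D2 \<and> card D2 \<le> 2 ^ (14 * (fsize \<phi> + 1) ^ 4) \<and> is_model D2 I2 \<sigma>2 \<phi>"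
proof -
  have Dne: "D \<noteq> {}" and \<sigma>: "\<forall>x. \<sigma> x \<in> D" and s: "sat D I \<sigma> \<phi>" using m unfolding is_model_def by auto
  interpret F: fmp D I \<phi> using Dne by unfold_locales
  obtain \<alpha> where \<alpha>: "\<forall>x. \<alpha> x \<in> F.Dn" "sat F.Dn F.In \<alpha> \<phi>" using F.fmp_main[OF uf \<sigma> s] by blast
  obtain g where g: "bij_betw g {0..<card F.Dn} F.Dn" using ex_bij_betw_nat_finite[OF F.finite_Dn] by blast
  define D2 where "D2 = {0..<card F.Dn}"
  define \<sigma>2 where "\<sigma>2 x = inv_into D2 g (\<alpha> x)" for x
  have im: "g ` D2 = F.Dn" using g unfolding D2_def by (simp add: bij_betw_def)
  have \<sigma>2D: "\<forall>x. \<sigma>2 x \<in> D2" unfolding \<sigma>2_def using \<alpha>(1) im by (metis inv_into_into)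
  have comp: "g \<circ> \<sigma>2 = \<alpha>" unfolding \<sigma>2_def using \<alpha>(1) im by (auto simp: fun_eq_iff f_inv_into_f)
  have "sat D2 (\<lambda>R ns. F.In R (map g ns)) \<sigma>2 \<phi> = sat F.Dn F.In (g \<circ> \<sigma>2) \<phi>"
    using sat_iso[OF g[folded D2_def] \<sigma>2D] .
  then have sat2: "sat D2 (\<lambda>R ns. F.In R (map g ns)) \<sigma>2 \<phi>" using \<alpha>(2) comp by simp
  have ne: "D2 \<noteq> {}" using \<sigma>2D by blast
  have "card D2 = card F.Dn" unfolding D2_def by simp
  also have "\<dots> \<le> 2 ^ (14 * F.AA ^ 4)" by (rule F.card_Dn)
  finally have c: "card D2 \<le> 2 ^ (14 * (fsize \<phi> + 1) ^ 4)" unfolding F.AA_def .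
  show ?thesis using ne \<sigma>2D sat2 c unfolding is_model_def D2_def by blast
qed

theorem mainTheorem2:
  shows "(\<forall>ar (\<phi>::fm). uf1 ar \<phi> \<longrightarrow>
            (\<exists>(D::'a set) I \<sigma>. is_model D I \<sigma> \<phi>) \<longrightarrow>
            (\<exists>(D::nat set) I \<sigma>. finite D \<and> is_model D I \<sigma> \<phi>))
       \<and> (\<exists>p::nat poly. \<forall>ar (\<phi>::fm). uf1 ar \<phi> \<longrightarrow>
            (\<exists>(D::'a set) I \<sigma>. is_model D I \<sigma> \<phi>) \<longrightarrow>
            (\<exists>(D::nat set) I \<sigma>. finite D \<and> card D \<le> 2 ^ poly p (fsize \<phi>) \<and> is_model D I \<sigma> \<phi>))"
proof -
  have key: "\<forall>ar (\<phi>::fm). uf1 ar \<phi> \<longrightarrow> (\<exists>(D::'a set) I \<sigma>. is_model D I \<sigma> \<phi>) \<longrightarrow>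
     (\<exists>(D2::nat set) I2 \<sigma>2. finite D2 \<and> card D2 \<le> 2 ^ (14 * (fsize \<phi> + 1) ^ 4) \<and> is_model D2 I2 \<sigma>2 \<phi>)"
    using fmp_nat by blast
  let ?p = "smult (14::nat) ([:1, 1:] ^ 4)"
  have pv: "poly ?p n = 14 * (n + 1) ^ 4" for n by (simp add: add.commute)
  show ?thesis
  proof
    show "\<forall>ar (\<phi>::fm). uf1 ar \<phi> \<longrightarrow> (\<exists>(D::'a set) I \<sigma>. is_model D I \<sigma> \<phi>) \<longrightarrow>
            (\<exists>(D::nat set) I \<sigma>. finite D \<and> is_model D I \<sigma> \<phi>)" using key by blast
    show "\<exists>p::nat poly. \<forall>ar (\<phi>::fm). uf1 ar \<phi> \<longrightarrow>
            (\<exists>(D::'a set) I \<sigma>. is_model D I \<sigma> \<phi>) \<longrightarrow>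
            (\<exists>(D::nat set) I \<sigma>. finite D \<and> card D \<le> 2 ^ poly p (fsize \<phi>) \<and> is_model D I \<sigma> \<phi>)"
      by (rule exI[of _ ?p]) (simp only: pv, use key in blast)
  qed
qed


end
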